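(* Let $(\Gamma,M)$ be an E-GCM graph whose Coxeter group $W=W(\Gamma,M)$ is finite, with longest element $w_0$. Let $\lambda$ be a strongly dominant position and let $(\gamma_{i_1},\dots,\gamma_{i_l})$ be any game sequence for $\lambda$ (it is finite). For $1\le j\le l$ let $\beta_j:=s_{i_1}\cdots s_{i_{j-1}}.\alpha_{i_j}\in\Phi_M^+$. Then the following are equivalent: (1) for each $\alpha\in\Phi_M^+$, $\phi_\alpha=\phi_{\beta_j}$ for some $j$ (i.e. $\alpha$ is the positive root functional at some fired node $\gamma_{i_j}$); (2) each OA-connected component $(\Gamma',M')$ of $(\Gamma,M)$ is unital OA-cyclic with $f_{\Gamma',M'}=1$; (3) $(\Gamma,M)$ has no odd asymmetries; (4) $\ell(w_0)=|\Phi_M^+|=l$.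
   Context: E-GCM, E-GCM graph: $M$ real $n\times n$, $M_{ii}=2$, $M_{ij}\le0$ ($i\neq j$), $M_{ij}\ne0\iff M_{ji}\ne0$, and nonzero products $M_{ij}M_{ji}$ are $\ge4$ or equal $4\cos^2(\pi/m)$, $m\ge3$ integer; nodes $\gamma_i$, adjacent iff $M_{ij}\ne0$. Positions $\lambda\in\mathbb{R}^n$; strongly dominant means all $\lambda_i>0$; firing $\gamma_i$ (allowed if $\lambda_i>0$) replaces $\lambda_j$ by $\lambda_j-M_{ij}\lambda_i$; a game sequence is the sequence of nodes fired in a numbers game that fires nodes with positive population until none remain. Coxeter group $W(\Gamma,M)$: generators $s_i$, relations $s_i^2=e$, $(s_is_j)^{m_{ij}}=e$ ($i\ne j$) where $m_{ij}=k$ if $M_{ij}M_{ji}=4\cos^2(\pi/k)$ for an integer $k\ge2$ (so $m_{ij}=2$ iff $M_{ij}M_{ji}=0$) and $m_{ij}=\infty$ (no relation) if $M_{ij}M_{ji}\ge4$; $\ell$ is the length function. Quasi-standard geometric representation: $V$ real vector space with basis $(\alpha_i)_{i\in I_n}$, $W$ acting by $s_i.\alpha_j=\alpha_j-M_{ij}\alpha_i$. Roots $\Phi_M=\{w.\alpha_i\}$; $\alpha=\sum c_i\alpha_i$ is positive if all $c_i\ge0$; $\Phi_M^+$ is the set of positive roots. For a root $\alpha=\sum c_i\alpha_i$, its root functional is the linear form $\phi_\alpha=\sum c_ix_i$ in indeterminates $x_1,\dots,x_n$. Nodes $\gamma_i,\gamma_j$ are odd-adjacent if $m_{ij}$ is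 odd (finite); they form an odd asymmetry if they are odd-adjacent and $M_{ij}\ne M_{ji}$. For odd $m_{ij}$ put $K_{ji}=-M_{ji}/(2\cos(\pi/m_{ij}))$. An OA-path is a sequence $\mathcal{P}=[\gamma_{i_0},\dots,\gamma_{i_p}]$ ($p\ge0$) with consecutive nodes odd-adjacent; $\Pi_{\mathcal P}=K_{i_pi_{p-1}}\cdots K_{i_1i_0}$ ($=1$ if $p=0$); it is an OA-cycle if $\gamma_{i_p}=\gamma_{i_0}$. A set of nodes is unital OA-cyclic if $\Pi_{\mathcal C}=1$ for all OA-cycles $\mathcal C$ within it. An OA-connected component is the induced E-GCM subgraph $(\Gamma',M')$ on a maximal set of nodes any two of which are joined by an OA-path. For such a component that is unital OA-cyclic, $f_{\Gamma',M'}$ denotes the number of elements of $\{K\alpha_x: K\in\mathbb{R}\}\cap\Phi_M^+$ for a node $\gamma_x$ of the component (this number does not depend on $x$). *)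

theory Defs
  imports Complex_Main
begin

text \<open>Vectors of V (coefficients w.r.t. the basis
  of simple roots) and positions are functions 'n => real.\<close>

definition is_EGCM :: "('n::finite \<Rightarrow> 'n \<Rightarrow> real) \<Rightarrow> bool" where
  "is_EGCM M \<longleftrightarrow>
     (\<forall>i. M i i = 2) \<and>
     (\<forall>i j. i \<noteq> j \<longrightarrow> M i j \<le> 0) \<and>
     (\<forall>i j. M i j \<noteq> 0 \<longleftrightarrow> M j i \<noteq> 0) \<and>
     (\<forall>i j. i \<noteq> j \<longrightarrow> M i j * M j i \<noteq> 0 \<longrightarrow>
        (M i j * M j i \<ge> 4 \<or>
         (\<exists>m::nat. m \<ge> 3 \<and> M i j * M j i = 4 * (cos (pi / real m))^2)))"

text \<open>Coxeter exponent m_ij: Some k (finite) or None (infinity); m_ii = 1.\<close>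
definition coxeter_m :: "('n \<Rightarrow> 'n \<Rightarrow> real) \<Rightarrow> 'n \<Rightarrow> 'n \<Rightarrow> nat option" where
  "coxeter_m M i j =
     (if i = j then Some 1
      else if \<exists>k::nat. k \<ge> 2 \<and> M i j * M j i = 4 * (cos (pi / real k))^2
      then Some (LEAST k::nat. k \<ge> 2 \<and> M i j * M j i = 4 * (cos (pi / real k))^2)
      else None)"

definition coxeter_relators :: "('n \<Rightarrow> 'n \<Rightarrow> real) \<Rightarrow> 'n list set" where
  "coxeter_relators M =
     {[i, i] | i. True} \<union>
     {concat (replicate k [i, j]) | i j k. i \<noteq> j \<and> coxeter_m M i j = Some k}"

text \<open>Equality of words in the Coxeter group W(Gamma,M): the congruence
  generated by the relators (all generators are involutions, so positive
  words suffice).\<close>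
inductive cox_eq :: "('n \<Rightarrow> 'n \<Rightarrow> real) \<Rightarrow> 'n list \<Rightarrow> 'n list \<Rightarrow> bool"
  for M where
  cox_refl: "cox_eq M xs xs"
| cox_sym: "cox_eq M xs ys \<Longrightarrow> cox_eq M ys xs"
| cox_trans: "cox_eq M xs ys \<Longrightarrow> cox_eq M ys zs \<Longrightarrow> cox_eq M xs zs"
| cox_rel: "r \<in> coxeter_relators M \<Longrightarrow> cox_eq M (xs @ r @ ys) (xs @ ys)"

definition coxeter_group :: "('n \<Rightarrow> 'n \<Rightarrow> real) \<Rightarrow> 'n list set set" where
  "coxeter_group M = UNIV // {(xs, ys). cox_eq M xs ys}"

definition coxeter_length :: "('n \<Rightarrow> 'n \<Rightarrow> real) \<Rightarrow> 'n list set \<Rightarrow> nat" where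
  "coxeter_length M w = (LEAST k. k \<in> length ` w)"

definition longest_element :: "('n \<Rightarrow> 'n \<Rightarrow> real) \<Rightarrow> 'n list set" where
  "longest_element M = (THE w. w \<in> coxeter_group M \<and>
      (\<forall>w' \<in> coxeter_group M. coxeter_length M w' \<le> coxeter_length M w))"

definition simple_root :: "'n \<Rightarrow> 'n \<Rightarrow> real" where
  "simple_root i = (\<lambda>k. if k = i then 1 else 0)"

definition refl_act :: "('n::finite \<Rightarrow> 'n \<Rightarrow> real) \<Rightarrow> 'n \<Rightarrow> ('n \<Rightarrow> real) \<Rightarrow> ('n \<Rightarrow> real)" where
  "refl_act M i v = (\<lambda>k. v k - (if k = i then (\<Sum>j\<in>UNIV. M i j * v j) else 0))"

text \<open>Action of the word s_{w1} ... s_{wk} (rightmost generator acts first).\<close>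
definition word_act :: "('n::finite \<Rightarrow> 'n \<Rightarrow> real) \<Rightarrow> 'n list \<Rightarrow> ('n \<Rightarrow> real) \<Rightarrow> ('n \<Rightarrow> real)" where
  "word_act M ws v = foldr (refl_act M) ws v"

definition roots :: "('n::finite \<Rightarrow> 'n \<Rightarrow> real) \<Rightarrow> ('n \<Rightarrow> real) set" where
  "roots M = {word_act M ws (simple_root i) | ws i. True}"

definition pos_roots :: "('n::finite \<Rightarrow> 'n \<Rightarrow> real) \<Rightarrow> ('n \<Rightarrow> real) set" where
  "pos_roots M = {a \<in> roots M. \<forall>k. a k \<ge> 0}"

definition root_functional :: "('n::finite \<Rightarrow> real) \<Rightarrow> ('n \<Rightarrow> real) \<Rightarrow> real" where
  "root_functional a = (\<lambda>x. \<Sum>i\<in>UNIV. a i * x i)"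

definition strongly_dominant :: "('n \<Rightarrow> real) \<Rightarrow> bool" where
  "strongly_dominant lam \<longleftrightarrow> (\<forall>i. lam i > 0)"

definition fire :: "('n \<Rightarrow> 'n \<Rightarrow> real) \<Rightarrow> 'n \<Rightarrow> ('n \<Rightarrow> real) \<Rightarrow> ('n \<Rightarrow> real)" where
  "fire M i lam = (\<lambda>j. lam j - M i j * lam i)"

fun legal_play :: "('n \<Rightarrow> 'n \<Rightarrow> real) \<Rightarrow> ('n \<Rightarrow> real) \<Rightarrow> 'n list \<Rightarrow> bool" where
  "legal_play M lam [] = True"
| "legal_play M lam (i # is) = (lam i > 0 \<and> legal_play M (fire M i lam) is)"

definition play :: "('n \<Rightarrow> 'n \<Rightarrow> real) \<Rightarrow> ('n \<Rightarrow> real) \<Rightarrow> 'n list \<Rightarrow> ('n \<Rightarrow> real)" where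
  "play M lam seq = fold (fire M) seq lam"

definition game_sequence :: "('n \<Rightarrow> 'n \<Rightarrow> real) \<Rightarrow> ('n \<Rightarrow> real) \<Rightarrow> 'n list \<Rightarrow> bool" where
  "game_sequence M lam seq \<longleftrightarrow> legal_play M lam seq \<and> (\<forall>j. play M lam seq j \<le> 0)"

text \<open>beta_j = s_{i_1} ... s_{i_{j-1}} . alpha_{i_j}, for 1 <= j <= l.\<close>
definition game_root :: "('n::finite \<Rightarrow> 'n \<Rightarrow> real) \<Rightarrow> 'n list \<Rightarrow> nat \<Rightarrow> ('n \<Rightarrow> real)" where
  "game_root M seq j = word_act M (take (j - 1) seq) (simple_root (seq ! (j - 1)))"

definition odd_adjacent :: "('n \<Rightarrow> 'n \<Rightarrow> real) \<Rightarrow> 'n \<Rightarrow> 'n \<Rightarrow> bool" where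
  "odd_adjacent M i j \<longleftrightarrow> i \<noteq> j \<and> (\<exists>k. coxeter_m M i j = Some k \<and> odd k)"

definition odd_asymmetry :: "('n \<Rightarrow> 'n \<Rightarrow> real) \<Rightarrow> 'n \<Rightarrow> 'n \<Rightarrow> bool" where
  "odd_asymmetry M i j \<longleftrightarrow> odd_adjacent M i j \<and> M i j \<noteq> M j i"

definition oa_K :: "('n \<Rightarrow> 'n \<Rightarrow> real) \<Rightarrow> 'n \<Rightarrow> 'n \<Rightarrow> real" where
  "oa_K M j i = - M j i / (2 * cos (pi / real (the (coxeter_m M i j))))"

definition oa_path :: "('n \<Rightarrow> 'n \<Rightarrow> real) \<Rightarrow> 'n list \<Rightarrow> bool" where
  "oa_path M ps \<longleftrightarrow> ps \<noteq> [] \<and> (\<forall>k < length ps - 1. odd_adjacent M (ps ! k) (ps ! (k + 1)))"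

definition oa_weight :: "('n \<Rightarrow> 'n \<Rightarrow> real) \<Rightarrow> 'n list \<Rightarrow> real" where
  "oa_weight M ps = (\<Prod>k < length ps - 1. oa_K M (ps ! (k + 1)) (ps ! k))"

definition oa_cycle :: "('n \<Rightarrow> 'n \<Rightarrow> real) \<Rightarrow> 'n list \<Rightarrow> bool" where
  "oa_cycle M ps \<longleftrightarrow> oa_path M ps \<and> last ps = hd ps"

definition unital_OA_cyclic :: "('n \<Rightarrow> 'n \<Rightarrow> real) \<Rightarrow> 'n set \<Rightarrow> bool" where
  "unital_OA_cyclic M S \<longleftrightarrow> (\<forall>ps. oa_cycle M ps \<and> set ps \<subseteq> S \<longrightarrow> oa_weight M ps = 1)"

definition oa_component :: "('n \<Rightarrow> 'n \<Rightarrow> real) \<Rightarrow> 'n \<Rightarrow> 'n set" where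
  "oa_component M x = {y. \<exists>ps. oa_path M ps \<and> hd ps = x \<and> last ps = y}"

definition f_at :: "('n::finite \<Rightarrow> 'n \<Rightarrow> real) \<Rightarrow> 'n \<Rightarrow> nat" where
  "f_at M x = card ({v. \<exists>K::real. v = (\<lambda>k. K * simple_root x k)} \<inter> pos_roots M)"

end

theory Submission
  imports Defs
begin

section \<open>Linear algebra of the reflections\<close>

definition fS :: "('n::finite \<Rightarrow> 'n \<Rightarrow> real) \<Rightarrow> 'n \<Rightarrow> ('n \<Rightarrow> real) \<Rightarrow> real" where
  "fS M i v = (\<Sum>j\<in>UNIV. M i j * v j)"

lemma refl_act_alt: "refl_act M i v = (\<lambda>k. v k - (if k = i then fS M i v else 0))"
  unfolding refl_act_def fS_def by (rule refl)

lemma fS_lin: "fS M i (\<lambda>k. a * u k + b * w k) = a * fS M i u + b * fS M i w"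
  by (simp add: fS_def sum.distrib sum_distrib_left algebra_simps)

lemma refl_act_lin:
  "refl_act M i (\<lambda>k. a * u k + b * w k) = (\<lambda>k. a * refl_act M i u k + b * refl_act M i w k)"
  by (auto simp add: refl_act_alt fS_lin algebra_simps)

lemma word_act_Nil[simp]: "word_act M [] v = v"
  by (simp add: word_act_def)

lemma word_act_Cons[simp]: "word_act M (i # ws) v = refl_act M i (word_act M ws v)"
  by (simp add: word_act_def)

lemma word_act_append: "word_act M (xs @ ys) v = word_act M xs (word_act M ys v)"
  by (simp add: word_act_def)

lemma word_act_lin:
  "word_act M ws (\<lambda>k. a * u k + b * w k) = (\<lambda>k. a * word_act M ws u k + b * word_act M ws w k)"
  by (induction ws) (simp_all add: refl_act_lin)

lemma word_act_scale:
  "word_act M ws (\<lambda>k. a * u k) = (\<lambda>k. a * word_act M ws u k)"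
  using word_act_lin[of M ws a u 0 u] by simp

lemma word_act_neg:
  "word_act M ws (\<lambda>k. - u k) = (\<lambda>k. - word_act M ws u k)"
  using word_act_scale[of M ws "-1" u] by simp

lemma fS_refl:
  assumes "M i i = 2"
  shows "fS M i (refl_act M i v) = - fS M i v"
proof -
  have "fS M i (refl_act M i v) = (\<Sum>j\<in>UNIV. M i j * v j - (if j = i then M i j * fS M i v else 0))"
    by (simp add: fS_def refl_act_alt algebra_simps if_distrib cong: if_cong)
  also have "\<dots> = fS M i v - M i i * fS M i v"
    by (simp add: sum_subtractf fS_def)
  finally show ?thesis using assms by simp
qed

lemma refl_refl:
  assumes "M i i = 2"
  shows "refl_act M i (refl_act M i v) = v"
proof -
  have h: "fS M i (refl_act M i v) = - fS M i v" by (rule fS_refl[of M i], fact)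
  show ?thesis
    apply (subst refl_act_alt[of M i "refl_act M i v"])
    apply (simp only: h)
    apply (auto simp: refl_act_alt)
    done
qed

lemma word_act_rev:
  assumes "\<forall>i. M i i = 2"
  shows "word_act M (rev ws) (word_act M ws v) = v"
  using assms by (induction ws arbitrary: v) (simp_all add: word_act_append refl_refl)

lemma word_act_rev':
  assumes "\<forall>i. M i i = 2"
  shows "word_act M ws (word_act M (rev ws) v) = v"
  using word_act_rev[where M=M and ws="rev ws"] assms by simp

lemma word_act_inj:
  assumes "\<forall>i. M i i = 2" "word_act M ws u = word_act M ws v"
  shows "u = v"
  by (metis assms(2) word_act_rev[where M=M and ws=ws] assms(1))

lemma simple_root_ne0: "simple_root i \<noteq> (\<lambda>k. 0)"
  by (metis simple_root_def zero_neq_one)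

lemma cox_eq_equivp: "equivp (cox_eq M)"
  by (intro equivpI reflpI sympI transpI) (auto intro: cox_eq.intros)

lemma cox_eq_context:
  "cox_eq M xs ys \<Longrightarrow> cox_eq M (as @ xs @ bs) (as @ ys @ bs)"
proof (induction rule: cox_eq.induct)
  case (cox_refl xs) then show ?case by (rule cox_eq.cox_refl)
next
  case (cox_sym xs ys) then show ?case by (metis cox_eq.cox_sym)
next
  case (cox_trans xs ys zs) then show ?case by (metis cox_eq.cox_trans)
next
  case (cox_rel r xs ys)
  then show ?case using cox_eq.cox_rel[of r M "as @ xs" "ys @ bs"] by simp
qed

lemma cox_eq_app_left: "cox_eq M xs ys \<Longrightarrow> cox_eq M (as @ xs) (as @ ys)"
  using cox_eq_context[of M xs ys as "[]"] by simp

lemma cox_eq_app_right: "cox_eq M xs ys \<Longrightarrow> cox_eq M (xs @ bs) (ys @ bs)"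
  using cox_eq_context[of M xs ys "[]" bs] by simp

lemma cox_eq_app: "cox_eq M xs ys \<Longrightarrow> cox_eq M xs' ys' \<Longrightarrow> cox_eq M (xs @ xs') (ys @ ys')"
  by (meson cox_eq.cox_trans cox_eq_app_left cox_eq_app_right)

lemma cox_eq_ss: "cox_eq M (xs @ [s, s] @ ys) (xs @ ys)"
  by (rule cox_eq.cox_rel) (auto simp: coxeter_relators_def)

lemma cox_eq_inv: "cox_eq M (xs @ rev xs) []"
proof (induction xs rule: rev_induct)
  case Nil then show ?case by (simp add: cox_eq.cox_refl)
next
  case (snoc x xs)
  have "cox_eq M ((xs @ [x]) @ rev (xs @ [x])) (xs @ rev xs)"
    using cox_eq_ss[of M xs x "rev xs"] by simp
  then show ?case using snoc cox_eq.cox_trans by blast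
qed

lemma cox_eq_inv': "cox_eq M (rev xs @ xs) []"
  using cox_eq_inv[of M "rev xs"] by simp

lemma coxeter_m_sym: "coxeter_m M i j = coxeter_m M j i"
  by (cases "i = j") (simp_all add: coxeter_m_def mult.commute eq_commute[of i j])

lemma concat_rep_Suc: "concat (replicate (Suc k) xs) = concat (replicate k xs) @ xs"
  by (induction k) auto

lemma concat_rep_comm: "concat (replicate k xs) @ xs = xs @ concat (replicate k xs)"
  by (induction k) auto

lemma rev_concat_rep: "rev (concat (replicate k [i, j])) = concat (replicate k [j, i])"
  by (induction k) (simp_all add: concat_rep_comm)

lemma relator_rev: "r \<in> coxeter_relators M \<Longrightarrow> rev r \<in> coxeter_relators M"
  unfolding coxeter_relators_def
  by (auto simp: rev_concat_rep coxeter_m_sym) (metis coxeter_m_sym)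

lemma cox_eq_rev: "cox_eq M xs ys \<Longrightarrow> cox_eq M (rev xs) (rev ys)"
proof (induction rule: cox_eq.induct)
  case (cox_refl xs) then show ?case by (rule cox_eq.cox_refl)
next
  case (cox_sym xs ys) then show ?case by (metis cox_eq.cox_sym)
next
  case (cox_trans xs ys zs) then show ?case by (metis cox_eq.cox_trans)
next
  case (cox_rel r xs ys)
  then show ?case using cox_eq.cox_rel[of "rev r" M "rev ys" "rev xs"] relator_rev[of r M] by simp
qed

lemma relator_even: "r \<in> coxeter_relators M \<Longrightarrow> even (length r)"
  by (auto simp: coxeter_relators_def length_concat sum_list_replicate)

lemma cox_eq_parity: "cox_eq M xs ys \<Longrightarrow> even (length xs) = even (length ys)"
  by (induction rule: cox_eq.induct) (auto dest: relator_even)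

section \<open>Length\<close>

definition len :: "('n \<Rightarrow> 'n \<Rightarrow> real) \<Rightarrow> 'n list \<Rightarrow> nat" where
  "len M xs = (LEAST k. \<exists>ys. cox_eq M xs ys \<and> length ys = k)"

lemma len_ex: "\<exists>ys. cox_eq M xs ys \<and> length ys = len M xs"
  unfolding len_def by (rule LeastI_ex) (auto intro: cox_eq.cox_refl)

lemma len_le: "cox_eq M xs ys \<Longrightarrow> len M xs \<le> length ys"
  unfolding len_def by (rule Least_le) auto

lemma len_le_length: "len M xs \<le> length xs"
  by (rule len_le) (rule cox_eq.cox_refl)

lemma len_cong: "cox_eq M xs ys \<Longrightarrow> len M xs = len M ys"
proof -
  assume a: "cox_eq M xs ys"
  obtain zs where z: "cox_eq M ys zs" "length zs = len M ys" using len_ex by blast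
  obtain us where u: "cox_eq M xs us" "length us = len M xs" using len_ex by blast
  have "len M xs \<le> len M ys" using len_le[of M xs zs] z a cox_eq.cox_trans by fastforce
  moreover have "len M ys \<le> len M xs"
  proof -
    have "cox_eq M ys us" using cox_eq.cox_trans[OF cox_eq.cox_sym[OF a] u(1)] .
    then show ?thesis using len_le[of M ys us] u by simp
  qed
  ultimately show ?thesis by simp
qed

lemma len_app: "len M (xs @ ys) \<le> len M xs + len M ys"
proof -
  obtain zs where z: "cox_eq M ys zs" "length zs = len M ys" using len_ex by blast
  obtain us where u: "cox_eq M xs us" "length us = len M xs" using len_ex by blast
  have "cox_eq M (xs @ ys) (us @ zs)" using cox_eq_app z u by blast
  then show ?thesis using len_le z u by fastforce
qed

lemma len_parity: "even (len M xs) = even (length xs)"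
  using len_ex[of M xs] cox_eq_parity by metis

lemma len_single: "len M [s] = 1"
proof -
  have "len M [s] \<le> 1" using len_le_length[of M "[s]"] by simp
  moreover have "odd (len M [s])" using len_parity[of M "[s]"] by simp
  ultimately show ?thesis by (cases "len M [s]") auto
qed

lemma len_Nil[simp]: "len M [] = 0"
  using len_le_length[of M "[]"] by simp

lemma len_snoc: "len M (xs @ [s]) = Suc (len M xs) \<or> Suc (len M (xs @ [s])) = len M xs"
proof -
  have 1: "len M (xs @ [s]) \<le> len M xs + 1" using len_single[of M s] len_app[of M xs "[s]"] by simp
  have "cox_eq M ((xs @ [s]) @ [s]) xs" using cox_eq_ss[of M xs s "[]"] by simp
  then have "len M xs \<le> len M (xs @ [s]) + 1"
    using len_cong[of M "(xs @ [s]) @ [s]" xs] len_app[of M "xs @ [s]" "[s]"] len_single[of M s] by simp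
  moreover have "even (len M (xs @ [s])) \<noteq> even (len M xs)" using len_parity[of M] by simp
  then have "len M (xs @ [s]) \<noteq> len M xs" by auto
  ultimately show ?thesis using 1 by arith
qed

lemma len_rev: "len M (rev xs) = len M xs"
proof -
  obtain zs where z: "cox_eq M xs zs" "length zs = len M xs" using len_ex by blast
  obtain us where u: "cox_eq M (rev xs) us" "length us = len M (rev xs)" using len_ex by blast
  have "len M (rev xs) \<le> len M xs" using len_le[of M "rev xs" "rev zs"] cox_eq_rev[OF z(1)] z by simp
  moreover have "len M xs \<le> len M (rev xs)" using len_le[of M xs "rev us"] cox_eq_rev[OF u(1)] u by simp
  ultimately show ?thesis by simp
qed

lemma len_Cons: "len M (s # xs) = Suc (len M xs) \<or> Suc (len M (s # xs)) = len M xs"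
  using len_snoc[of M "rev xs" s] by (simp add: len_rev[of M "s # xs", symmetric] len_rev[of M xs, symmetric])

lemma len_0: "len M xs = 0 \<Longrightarrow> cox_eq M xs []"
  using len_ex[of M xs] by auto


definition lenI :: "('n \<Rightarrow> 'n \<Rightarrow> real) \<Rightarrow> 'n set \<Rightarrow> 'n list \<Rightarrow> nat" where
  "lenI M I xs = (LEAST k. \<exists>ys. set ys \<subseteq> I \<and> cox_eq M xs ys \<and> length ys = k)"

lemma lenI_ex: "set xs \<subseteq> I \<Longrightarrow> \<exists>ys. set ys \<subseteq> I \<and> cox_eq M xs ys \<and> length ys = lenI M I xs"
  unfolding lenI_def by (rule LeastI_ex) (auto intro: cox_eq.cox_refl)

lemma lenI_le: "set ys \<subseteq> I \<Longrightarrow> cox_eq M xs ys \<Longrightarrow> lenI M I xs \<le> length ys"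
  unfolding lenI_def by (rule Least_le) auto

lemma lenI_cong: "cox_eq M xs ys \<Longrightarrow> set xs \<subseteq> I \<Longrightarrow> set ys \<subseteq> I \<Longrightarrow> lenI M I xs = lenI M I ys"
proof -
  assume a: "cox_eq M xs ys" "set xs \<subseteq> I" "set ys \<subseteq> I"
  obtain zs where z: "set zs \<subseteq> I" "cox_eq M ys zs" "length zs = lenI M I ys" using lenI_ex[OF a(3), of M] by blast
  obtain us where u: "set us \<subseteq> I" "cox_eq M xs us" "length us = lenI M I xs" using lenI_ex[OF a(2), of M] by blast
  have "cox_eq M xs zs" using cox_eq.cox_trans[OF a(1) z(2)] .
  then have "lenI M I xs \<le> length zs" by (rule lenI_le[OF z(1)])
  then have "lenI M I xs \<le> lenI M I ys" using z(3) by linarith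
  moreover have "lenI M I ys \<le> lenI M I xs"
  proof -
    have "cox_eq M ys us" using cox_eq.cox_trans[OF cox_eq.cox_sym[OF a(1)] u(2)] .
    then have "lenI M I ys \<le> length us" by (rule lenI_le[OF u(1)])
    then show ?thesis using u(3) by linarith
  qed
  ultimately show ?thesis by simp
qed

lemma len_le_lenI: "set xs \<subseteq> I \<Longrightarrow> len M xs \<le> lenI M I xs"
proof -
  assume "set xs \<subseteq> I"
  then obtain ys where "set ys \<subseteq> I" "cox_eq M xs ys" "length ys = lenI M I xs" using lenI_ex[of xs I M] by blast
  then show ?thesis using len_le[of M xs ys] by simp
qed

lemma lenI_Cons: "set xs \<subseteq> I \<Longrightarrow> s \<in> I \<Longrightarrow> lenI M I (s # xs) \<le> Suc (lenI M I xs)"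
proof -
  assume a: "set xs \<subseteq> I" "s \<in> I"
  obtain zs where z: "set zs \<subseteq> I" "cox_eq M xs zs" "length zs = lenI M I xs" using lenI_ex[OF a(1), of M] by blast
  have "cox_eq M (s # xs) (s # zs)" using cox_eq_app_left[OF z(2), of "[s]"] by simp
  moreover have "set (s # zs) \<subseteq> I" using z a by auto
  ultimately have "lenI M I (s # xs) \<le> length (s # zs)" using lenI_le by blast
  then show ?thesis using z(3) by simp
qed

section \<open>Parity of letters in a closed set\<close>

lemma filter_concat_rep: "length (filter P (concat (replicate k xs))) = k * length (filter P xs)"
  by (induction k) auto

lemma odd_adjacent_sym: "odd_adjacent M i j \<Longrightarrow> odd_adjacent M j i"
  by (auto simp: odd_adjacent_def coxeter_m_sym)

lemma relator_count:
  assumes "r \<in> coxeter_relators M" "\<forall>a b. a \<in> C \<longrightarrow> odd_adjacent M a b \<longrightarrow> b \<in> C"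
  shows "even (length (filter (\<lambda>x. x \<in> C) r))"
proof -
  consider (a) i where "r = [i, i]" | (b) i j k where "r = concat (replicate k [i, j])" "i \<noteq> j" "coxeter_m M i j = Some k"
    using assms(1) unfolding coxeter_relators_def by blast
  then show ?thesis
  proof cases
    case a then show ?thesis by simp
  next
    case (b i j k)
    have e: "length (filter (\<lambda>x. x \<in> C) r) = k * length (filter (\<lambda>x. x \<in> C) [i, j])"
      unfolding b(1) by (rule filter_concat_rep)
    show ?thesis
    proof (cases "even k")
      case True then show ?thesis using e by simp
    next
      case False
      then have "odd_adjacent M i j" using b by (auto simp: odd_adjacent_def)
      then have "i \<in> C \<longleftrightarrow> j \<in> C" using assms(2) odd_adjacent_sym by metis
      then have "even (length (filter (\<lambda>x. x \<in> C) [i, j]))" by (cases "i \<in> C") simp_all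
      then show ?thesis using e by simp
    qed
  qed
qed

lemma cox_eq_count:
  assumes "cox_eq M xs ys" "\<forall>a b. a \<in> C \<longrightarrow> odd_adjacent M a b \<longrightarrow> b \<in> C"
  shows "even (length (filter (\<lambda>x. x \<in> C) xs)) = even (length (filter (\<lambda>x. x \<in> C) ys))"
  using assms(1)
proof (induction rule: cox_eq.induct)
  case (cox_rel r xs ys)
  have "even (length (filter (\<lambda>x. x \<in> C) r))" by (rule relator_count[OF cox_rel assms(2)])
  then show ?case by simp
qed simp_all

section \<open>Chebyshev-like sequence\<close>

fun tseq :: "real \<Rightarrow> nat \<Rightarrow> real" where
  "tseq d 0 = 0"
| "tseq d (Suc 0) = 1"
| "tseq d (Suc (Suc k)) = d * tseq d (Suc k) - tseq d k"

lemma sin_rec: "sin (real (Suc (Suc k)) * x) = 2 * cos x * sin (real (Suc k) * x) - sin (real k * x)"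
proof -
  have a: "real (Suc (Suc k)) * x = real (Suc k) * x + x" by (simp add: algebra_simps)
  have b: "real k * x = real (Suc k) * x - x" by (simp add: algebra_simps)
  show ?thesis unfolding a b sin_add sin_diff by (simp add: algebra_simps)
qed

lemma tseq_sin_aux:
  assumes "sin x \<noteq> 0"
  shows "tseq (2 * cos x) k = sin (real k * x) / sin x \<and> tseq (2 * cos x) (Suc k) = sin (real (Suc k) * x) / sin x"
proof (induction k)
  case 0 then show ?case using assms by simp
next
  case (Suc k)
  then show ?case using assms by (simp only: tseq.simps sin_rec) (simp add: field_simps)
qed

lemma tseq_sin: "sin x \<noteq> 0 \<Longrightarrow> tseq (2 * cos x) k = sin (real k * x) / sin x"
  using tseq_sin_aux by blast

lemma tseq_ge2_aux: "d \<ge> 2 \<Longrightarrow> tseq d k \<ge> 0 \<and> tseq d (Suc k) - tseq d k \<ge> 1"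
proof (induction k)
  case 0 then show ?case by simp
next
  case (Suc k)
  then have h: "tseq d k \<ge> 0" "tseq d (Suc k) - tseq d k \<ge> 1" by auto
  have "(d - 2) * tseq d (Suc k) \<ge> 0" using h Suc.prems by simp
  moreover have "d * tseq d (Suc k) = (d - 2) * tseq d (Suc k) + 2 * tseq d (Suc k)" by algebra
  ultimately show ?case using h by simp
qed

lemma tseq_ge2: "d \<ge> 2 \<Longrightarrow> tseq d k \<ge> 0"
  using tseq_ge2_aux by blast

lemma pi_m_facts:
  assumes "(m::nat) \<ge> 2"
  shows "sin (pi / real m) > 0" "cos (pi / real m) \<ge> 0" "cos (pi / real m) < 1"
proof -
  have m: "real m \<ge> 2" using assms by simp
  have p: "pi / real m > 0" using m by simp
  have q: "pi / real m \<le> pi / 2" using m by (intro divide_left_mono) auto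
  have q2: "pi / real m < pi" using q pi_gt_zero by linarith
  then show "sin (pi / real m) > 0" using p by (intro sin_gt_zero) auto
  show "cos (pi / real m) \<ge> 0" using p q by (intro cos_ge_zero) auto
  have "cos (pi / real m) < cos 0" using p q2 by (intro cos_monotone_0_pi) auto
  then show "cos (pi / real m) < 1" by simp
qed

lemma tseq_m:
  assumes "(m::nat) \<ge> 2"
  shows "tseq (2 * cos (pi / real m)) m = 0"
    "tseq (2 * cos (pi / real m)) (m - 1) = 1"
    "tseq (2 * cos (pi / real m)) (2 * m) = 0"
    "tseq (2 * cos (pi / real m)) (Suc (2 * m)) = 1"
    "k \<le> m \<Longrightarrow> tseq (2 * cos (pi / real m)) k \<ge> 0"
proof -
  let ?x = "pi / real m"
  have s: "sin ?x > 0" using pi_m_facts[OF assms] by simp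
  have m0: "real m \<noteq> 0" using assms by simp
  show "tseq (2 * cos ?x) m = 0" using s m0 by (simp add: tseq_sin)
  have "real (m - 1) * ?x = pi - ?x" using assms m0 by (simp add: of_nat_diff field_simps)
  then show "tseq (2 * cos ?x) (m - 1) = 1" using s by (simp add: tseq_sin)
  have "real (2 * m) * ?x = 2 * pi" using m0 by simp
  then show "tseq (2 * cos ?x) (2 * m) = 0" using s by (simp add: tseq_sin)
  have "real (Suc (2 * m)) * ?x = ?x + 2 * pi" using m0 by (simp add: field_simps)
  then show "tseq (2 * cos ?x) (Suc (2 * m)) = 1" using s by (simp add: tseq_sin sin_add)
  assume "k \<le> m"
  then have "real k * ?x \<le> pi" using m0 by (simp add: field_simps)
  moreover have "real k * ?x \<ge> 0" by simp
  ultimately have "sin (real k * ?x) \<ge> 0" by (intro sin_ge_zero)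
  then show "tseq (2 * cos ?x) k \<ge> 0" using s by (simp add: tseq_sin)
qed


section \<open>Alternating words and rank two computations\<close>

fun altw :: "'n \<Rightarrow> 'n \<Rightarrow> nat \<Rightarrow> 'n list" where
  "altw s t 0 = []"
| "altw s t (Suc k) = (if even k then t else s) # altw s t k"

definition vec2 :: "'n \<Rightarrow> 'n \<Rightarrow> real \<Rightarrow> real \<Rightarrow> ('n \<Rightarrow> real)" where
  "vec2 s t p q = (\<lambda>l. p * simple_root s l + q * simple_root t l)"

lemma fS_vec2:
  assumes "s \<noteq> t"
  shows "fS M i (vec2 s t p q) = p * M i s + q * M i t"
proof -
  have "fS M i (vec2 s t p q) = (\<Sum>j\<in>UNIV. (if j = s then p * M i s else 0) + (if j = t then q * M i t else 0))"
    unfolding fS_def vec2_def simple_root_def by (rule sum.cong) (use assms in auto)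
  also have "\<dots> = p * M i s + q * M i t" by (simp add: sum.distrib)
  finally show ?thesis .
qed

lemma vec2_simple: "simple_root s = vec2 s t 1 0"
  by (simp add: vec2_def)

lemma vec2_simple_t: "(\<lambda>l. K * simple_root t l) = vec2 s t 0 K"
  by (simp add: vec2_def)

lemma refl_vec2_s:
  assumes "s \<noteq> t" "M s s = 2"
  shows "refl_act M s (vec2 s t p q) = vec2 s t (- p - M s t * q) q"
proof -
  have f: "fS M s (vec2 s t p q) = p * 2 + q * M s t" using fS_vec2[OF assms(1)] assms(2) by simp
  show ?thesis unfolding refl_act_alt f by (rule ext) (auto simp: vec2_def simple_root_def algebra_simps assms(1))
qed

lemma refl_vec2_t:
  assumes "s \<noteq> t" "M t t = 2"
  shows "refl_act M t (vec2 s t p q) = vec2 s t p (- q - M t s * p)"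
proof -
  have f: "fS M t (vec2 s t p q) = p * M t s + q * 2" using fS_vec2[OF assms(1)] assms(2) by simp
  show ?thesis unfolding refl_act_alt f by (rule ext) (auto simp: vec2_def simple_root_def algebra_simps assms(1))
qed

lemma dihedral_seq:
  assumes st: "s \<noteq> t" "M s s = 2" "M t t = 2"
    and d: "d > 0" "d * d = M s t * M t s" and K: "K = - M t s / d"
  shows "word_act M (altw s t k) (simple_root s) =
    (if even k then vec2 s t (tseq d (Suc k)) (K * tseq d k)
     else vec2 s t (tseq d k) (K * tseq d (Suc k)))"
proof (induction k)
  case 0 then show ?case by (simp add: vec2_simple[of s t])
next
  case (Suc k)
  have Kd: "- M t s = K * d" using K d by simp
  have Kd2: "- M s t * K = d" using K d
    by (metis (no_types, lifting) divide_minus_left minus_mult_minus mult.commute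
        nonzero_mult_div_cancel_right order_less_irrefl times_divide_eq_right)
  show ?case
  proof (cases "even k")
    case True
    have "word_act M (altw s t (Suc k)) (simple_root s) = refl_act M t (vec2 s t (tseq d (Suc k)) (K * tseq d k))"
      using Suc True by simp
    also have "\<dots> = vec2 s t (tseq d (Suc k)) (- (K * tseq d k) - M t s * tseq d (Suc k))"
      by (rule refl_vec2_t[where M=M, OF st(1) st(3)])
    also have "- (K * tseq d k) - M t s * tseq d (Suc k) = - (K * tseq d k) + (- M t s) * tseq d (Suc k)"
      by simp
    also have "\<dots> = - (K * tseq d k) + (K * d) * tseq d (Suc k)" using Kd by simp
    also have "\<dots> = K * tseq d (Suc (Suc k))" by (simp add: algebra_simps)
    finally show ?thesis using True by simp
  next
    case False
    have "word_act M (altw s t (Suc k)) (simple_root s) = refl_act M s (vec2 s t (tseq d k) (K * tseq d (Suc k)))"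
      using Suc False by simp
    also have "\<dots> = vec2 s t (- tseq d k - M s t * (K * tseq d (Suc k))) (K * tseq d (Suc k))"
      by (rule refl_vec2_s[where M=M, OF st(1) st(2)])
    also have "- tseq d k - M s t * (K * tseq d (Suc k)) = - tseq d k + (- M s t * K) * tseq d (Suc k)"
      by (simp add: algebra_simps)
    also have "\<dots> = - tseq d k + d * tseq d (Suc k)" using Kd2 by simp
    also have "\<dots> = tseq d (Suc (Suc k))" by (simp add: algebra_simps)
    finally show ?thesis using False by simp
  qed
qed

lemma altw_length: "length (altw s t k) = k"
  by (induction k) auto

lemma altw_set: "set (altw s t k) \<subseteq> {s, t}"
  by (induction k) auto

lemma altw_even: "altw s t (2 * k) = concat (replicate k [s, t])"
proof (induction k)
  case 0 then show ?case by simp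
next
  case (Suc k)
  have e: "2 * Suc k = Suc (Suc (2 * k))" by simp
  have "altw s t (2 * Suc k) = s # t # altw s t (2 * k)" unfolding e by simp
  then show ?case using Suc by simp
qed

lemma egcm_diag: "is_EGCM M \<Longrightarrow> M i i = 2"
  by (simp add: is_EGCM_def)

lemma egcm_diag_all: "is_EGCM M \<Longrightarrow> \<forall>i. M i i = 2"
  by (simp add: is_EGCM_def)

lemma egcm_offdiag: "is_EGCM M \<Longrightarrow> i \<noteq> j \<Longrightarrow> M i j \<le> 0"
  by (simp add: is_EGCM_def)

lemma egcm_zero: "is_EGCM M \<Longrightarrow> M i j = 0 \<longleftrightarrow> M j i = 0"
  by (auto simp: is_EGCM_def)

lemma egcm_prod_nonneg: "is_EGCM M \<Longrightarrow> i \<noteq> j \<Longrightarrow> M i j * M j i \<ge> 0"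
  using egcm_offdiag[of M i j] egcm_offdiag[of M j i] by (simp add: mult_nonpos_nonpos)

lemma cm_Some:
  assumes "i \<noteq> j" "coxeter_m M i j = Some m"
  shows "m \<ge> 2 \<and> M i j * M j i = 4 * (cos (pi / real m))^2"
proof -
  have ex: "\<exists>k::nat. k \<ge> 2 \<and> M i j * M j i = 4 * (cos (pi / real k))^2"
    using assms by (auto simp: coxeter_m_def split: if_splits)
  then have "m = (LEAST k::nat. k \<ge> 2 \<and> M i j * M j i = 4 * (cos (pi / real k))^2)"
    using assms by (auto simp: coxeter_m_def)
  then show ?thesis using LeastI_ex[OF ex] by simp
qed

lemma cm_None:
  assumes "is_EGCM M" "i \<noteq> j" "coxeter_m M i j = None"
  shows "M i j * M j i \<ge> 4"
proof -
  have nex: "\<not> (\<exists>k::nat. k \<ge> 2 \<and> M i j * M j i = 4 * (cos (pi / real k))^2)"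
    using assms(2,3) by (auto simp: coxeter_m_def split: if_splits)
  have "M i j * M j i \<noteq> 0"
  proof
    assume "M i j * M j i = 0"
    then have "2 \<ge> (2::nat) \<and> M i j * M j i = 4 * (cos (pi / real (2::nat)))^2" by simp
    then show False using nex by blast
  qed
  then have "M i j * M j i \<ge> 4 \<or> (\<exists>m::nat. m \<ge> 3 \<and> M i j * M j i = 4 * (cos (pi / real m))^2)"
    using assms(1,2) unfolding is_EGCM_def by blast
  then show ?thesis
  proof
    assume "\<exists>m::nat. m \<ge> 3 \<and> M i j * M j i = 4 * (cos (pi / real m))^2"
    then obtain m :: nat where "m \<ge> 3" "M i j * M j i = 4 * (cos (pi / real m))^2" by blast
    then have "m \<ge> 2 \<and> M i j * M j i = 4 * (cos (pi / real m))^2" by simp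
    then show ?thesis using nex by blast
  qed simp
qed

lemma cm_zero:
  assumes "i \<noteq> j" "coxeter_m M i j = Some m" "M i j * M j i = 0"
  shows "m = 2"
proof -
  have h: "m \<ge> 2" "cos (pi / real m) = 0" using cm_Some[OF assms(1,2)] assms(3) by auto
  show ?thesis
  proof (rule ccontr)
    assume "m \<noteq> 2"
    then have "m \<ge> 3" using h by simp
    then have "pi / real m < pi / 2" by (intro divide_strict_left_mono) auto
    moreover have "pi / real m > 0" using h by simp
    ultimately have "cos (pi / real m) > 0" by (intro cos_gt_zero) auto
    then show False using h by simp
  qed
qed

lemma cm_pos:
  assumes "i \<noteq> j" "coxeter_m M i j = Some m" "M i j * M j i > 0"
  shows "m \<ge> 3" "cos (pi / real m) > 0"
proof -
  have h: "m \<ge> 2" "M i j * M j i = 4 * (cos (pi / real m))^2" using cm_Some[OF assms(1,2)] by auto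
  then have "cos (pi / real m) \<noteq> 0" using assms(3) by auto
  then show "cos (pi / real m) > 0" using pi_m_facts(2)[OF h(1)] by simp
  show "m \<ge> 3"
  proof (rule ccontr)
    assume "\<not> m \<ge> 3" then have "m = 2" using h by simp
    then have "M i j * M j i = 0" using h by simp
    then show False using assms(3) by linarith
  qed
qed

section \<open>The relators act trivially\<close>

lemma word_act_fix:
  "(\<forall>l \<in> set x. refl_act M l u = u) \<Longrightarrow> word_act M x u = u"
  by (induction x) auto

lemma fS_diff: "fS M i (\<lambda>k. v k - w k) = fS M i v - fS M i w"
  by (simp add: fS_def sum_subtractf algebra_simps)

lemma fix_span:
  assumes "M i i = 2" "M j j = 2" "i \<noteq> j" "M i j * M j i \<noteq> 4" "set x \<subseteq> {i, j}"
    and xi: "word_act M x (simple_root i) = simple_root i"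
    and xj: "word_act M x (simple_root j) = simple_root j"
  shows "word_act M x v = v"
proof -
  define D where "D = 4 - M i j * M j i"
  have D0: "D \<noteq> 0" using assms(4) by (simp add: D_def)
  define a where "a = fS M i v"
  define b where "b = fS M j v"
  define p where "p = (2 * a - M i j * b) / D"
  define q where "q = (2 * b - M j i * a) / D"
  define u where "u = (\<lambda>k. v k - vec2 i j p q k)"
  have e1: "(2 * a - M i j * b) * 2 + (2 * b - M j i * a) * M i j = a * D"
    by (simp add: D_def algebra_simps)
  have e2: "(2 * a - M i j * b) * M j i + (2 * b - M j i * a) * 2 = b * D"
    by (simp add: D_def algebra_simps)
  have fi: "fS M i (vec2 i j p q) = a"
  proof -
    have "fS M i (vec2 i j p q) = p * 2 + q * M i j" unfolding fS_vec2[OF assms(3)] assms(1) ..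
    also have "\<dots> = ((2 * a - M i j * b) * 2 + (2 * b - M j i * a) * M i j) / D"
      unfolding p_def q_def by (simp add: add_divide_distrib)
    also have "\<dots> = a" unfolding e1 using D0 by simp
    finally show ?thesis .
  qed
  have fj: "fS M j (vec2 i j p q) = b"
  proof -
    have "fS M j (vec2 i j p q) = p * M j i + q * 2" unfolding fS_vec2[OF assms(3)] assms(2) ..
    also have "\<dots> = ((2 * a - M i j * b) * M j i + (2 * b - M j i * a) * 2) / D"
      unfolding p_def q_def by (simp add: add_divide_distrib)
    also have "\<dots> = b" unfolding e2 using D0 by simp
    finally show ?thesis .
  qed
  have ui: "fS M i u = 0" unfolding u_def fS_diff fi a_def by simp
  have uj: "fS M j u = 0" unfolding u_def fS_diff fj b_def by simp
  have "\<forall>l \<in> set x. refl_act M l u = u"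
  proof
    fix l assume "l \<in> set x"
    then have "l = i \<or> l = j" using assms(5) by auto
    then show "refl_act M l u = u" using ui uj by (auto simp: refl_act_alt)
  qed
  then have wu: "word_act M x u = u" by (rule word_act_fix)
  have wv2: "word_act M x (vec2 i j p q) = vec2 i j p q"
    unfolding vec2_def word_act_lin xi xj by simp
  have "v = (\<lambda>k. 1 * u k + 1 * vec2 i j p q k)" by (simp add: u_def)
  then have "word_act M x v = (\<lambda>k. 1 * word_act M x u k + 1 * word_act M x (vec2 i j p q) k)"
    by (metis word_act_lin)
  also have "\<dots> = (\<lambda>k. u k + vec2 i j p q k)" using wu wv2 by simp
  also have "\<dots> = v" by (simp add: u_def)
  finally show ?thesis .
qed


lemma product_pos_setup:
  assumes "is_EGCM M" "s \<noteq> t" "coxeter_m M s t = Some m" "M s t * M t s > 0"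
  shows "2 * cos (pi / real m) > 0" "(2 * cos (pi / real m)) * (2 * cos (pi / real m)) = M s t * M t s" "m \<ge> 3"
proof -
  have h: "m \<ge> 2 \<and> M s t * M t s = 4 * (cos (pi / real m))^2" using cm_Some[OF assms(2,3)] .
  show "2 * cos (pi / real m) > 0" using cm_pos[OF assms(2,3,4)] by simp
  show "(2 * cos (pi / real m)) * (2 * cos (pi / real m)) = M s t * M t s" using h by (simp add: power2_eq_square)
  show "m \<ge> 3" using cm_pos[OF assms(2,3,4)] by simp
qed

lemma relator_alpha_i:
  assumes "is_EGCM M" "i \<noteq> j" "coxeter_m M i j = Some m"
  shows "word_act M (concat (replicate m [i, j])) (simple_root i) = simple_root i"
proof (cases "M i j * M j i > 0")
  case True
  note st = product_pos_setup[OF assms True]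
  define d where "d = 2 * cos (pi / real m)"
  define K where "K = - M j i / d"
  have "word_act M (altw i j (2 * m)) (simple_root i) = vec2 i j (tseq d (Suc (2 * m))) (K * tseq d (2 * m))"
    using dihedral_seq[of i j M d K "2 * m"] assms egcm_diag[OF assms(1)] st by (simp add: d_def K_def)
  also have "\<dots> = simple_root i" using tseq_m[of m] st by (simp add: d_def vec2_simple[of i j])
  finally show ?thesis by (simp add: altw_even)
next
  case False
  then have p0: "M i j * M j i = 0" using egcm_prod_nonneg[OF assms(1,2)] by linarith
  then have m2: "m = 2" using cm_zero[OF assms(2,3)] by simp
  have z: "M i j = 0" "M j i = 0" using p0 egcm_zero[OF assms(1), of i j] by auto
  have e: "concat (replicate m [i, j]) = [i, j, i, j]" using m2 by (simp add: numeral_2_eq_2)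
  show ?thesis unfolding e vec2_simple[of i j]
    using refl_vec2_s[of i j M] refl_vec2_t[of i j M] assms(2) egcm_diag[OF assms(1)] z by simp
qed

lemma relator_act:
  assumes "is_EGCM M" "r \<in> coxeter_relators M"
  shows "word_act M r v = v"
proof -
  consider (a) i where "r = [i, i]" | (b) i j m where "r = concat (replicate m [i, j])" "i \<noteq> j" "coxeter_m M i j = Some m"
    using assms(2) unfolding coxeter_relators_def by blast
  then show ?thesis
  proof cases
    case a then show ?thesis using refl_refl[of M i v] egcm_diag[OF assms(1)] by simp
  next
    case (b i j m)
    have h: "m \<ge> 2 \<and> M i j * M j i = 4 * (cos (pi / real m))^2" using cm_Some[OF b(2,3)] .
    have c: "cos (pi / real m) \<ge> 0" "cos (pi / real m) < 1" using pi_m_facts[of m] h by auto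
    then have "(cos (pi / real m))^2 < 1" by (simp add: power_less_one_iff abs_square_less_1)
    then have ne4: "M i j * M j i \<noteq> 4" using h by simp
    have xi: "word_act M r (simple_root i) = simple_root i" using relator_alpha_i[OF assms(1) b(2,3)] b(1) by simp
    have ji: "word_act M (concat (replicate m [j, i])) (simple_root j) = simple_root j"
      using relator_alpha_i[OF assms(1), of j i m] b coxeter_m_sym[of M i j] by auto
    have rr: "r = rev (concat (replicate m [j, i]))" using b(1) rev_concat_rep[of m j i] by simp
    have xj: "word_act M r (simple_root j) = simple_root j"
      using word_act_rev[of M "concat (replicate m [j, i])" "simple_root j"] egcm_diag_all[OF assms(1)] ji rr by simp
    have st: "set r \<subseteq> {i, j}" using b(1) by (auto simp: set_concat)
    show ?thesis
      by (rule fix_span[OF egcm_diag[OF assms(1)] egcm_diag[OF assms(1)] b(2) ne4 st xi xj])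
  qed
qed

lemma cox_eq_act:
  assumes "is_EGCM M" "cox_eq M xs ys"
  shows "word_act M xs = word_act M ys"
  using assms(2)
proof (induction rule: cox_eq.induct)
  case (cox_rel r xs ys)
  show ?case by (rule ext) (simp add: word_act_append relator_act[OF assms(1) cox_rel])
qed simp_all

lemma oa_step:
  assumes "is_EGCM M" "odd_adjacent M s t"
  shows "\<exists>u. word_act M u (simple_root s) = (\<lambda>l. oa_K M t s * simple_root t l)"
    "oa_K M t s > 0"
    "M s t = M t s \<Longrightarrow> oa_K M t s = 1"
    "oa_K M t s = 1 \<Longrightarrow> M s t = M t s"
proof -
  obtain m where m: "s \<noteq> t" "coxeter_m M s t = Some m" "odd m" using assms(2) by (auto simp: odd_adjacent_def)
  have h: "m \<ge> 2 \<and> M s t * M t s = 4 * (cos (pi / real m))^2" using cm_Some[OF m(1,2)] .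
  then have m3: "m \<ge> 3" using m(3) by (cases "m = 2") auto
  have "pi / real m < pi / 2" using m3 by (intro divide_strict_left_mono) auto
  moreover have "pi / real m > 0" using m3 by simp
  ultimately have c: "cos (pi / real m) > 0" by (intro cos_gt_zero) auto
  then have pp: "M s t * M t s > 0" using h by simp
  note st = product_pos_setup[OF assms(1) m(1,2) pp]
  define d where "d = 2 * cos (pi / real m)"
  define K where "K = - M t s / d"
  have Kdef: "oa_K M t s = K" by (simp add: oa_K_def K_def d_def m(2))
  have me: "even (m - 1)" using m(3) m3 by simp
  have "word_act M (altw s t (m - 1)) (simple_root s) = vec2 s t (tseq d m) (K * tseq d (m - 1))"
    using dihedral_seq[of s t M d K "m - 1"] assms egcm_diag[OF assms(1)] st m(1) me m3
    by (simp add: d_def K_def)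
  also have "\<dots> = vec2 s t 0 K" using tseq_m[of m] m3 by (simp add: d_def)
  finally show "\<exists>u. word_act M u (simple_root s) = (\<lambda>l. oa_K M t s * simple_root t l)"
    unfolding Kdef vec2_simple_t[of K t s] by blast
  have nz: "M t s \<noteq> 0" using pp by auto
  have "M t s \<le> 0" using egcm_offdiag[OF assms(1), of t s] m(1) by simp
  then have neg: "M t s < 0" using nz by linarith
  have d0: "d > 0" using st by (simp add: d_def)
  then show "oa_K M t s > 0" unfolding Kdef K_def using neg by (simp add: divide_neg_pos)
  have dd: "d * d = M s t * M t s" using st by (simp add: d_def)
  show "M s t = M t s \<Longrightarrow> oa_K M t s = 1"
  proof -
    assume sym: "M s t = M t s"
    then have "d * d = (- M t s) * (- M t s)" using dd by simp
    then have "d = - M t s" using d0 neg by (metis abs_of_pos neg_0_less_iff_less real_sqrt_abs2 real_sqrt_mult_self)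
    then show ?thesis unfolding Kdef K_def using d0 by simp
  qed
  show "oa_K M t s = 1 \<Longrightarrow> M s t = M t s"
  proof -
    assume "oa_K M t s = 1"
    then have "- M t s = d" unfolding Kdef K_def using d0 by (simp add: field_simps)
    then have "M s t * M t s = (- M t s) * (- M t s)" using dd by simp
    then have "(M s t - M t s) * M t s = 0" by (simp add: algebra_simps)
    then show ?thesis using nz by simp
  qed
qed

lemma cm_exists_zero:
  assumes "i \<noteq> j" "M i j * M j i = 0"
  shows "coxeter_m M i j = Some 2"
proof -
  have ex: "\<exists>k::nat. k \<ge> 2 \<and> M i j * M j i = 4 * (cos (pi / real k))^2"
    by (rule exI[of _ 2]) (simp add: assms(2))
  have "(LEAST k::nat. k \<ge> 2 \<and> M i j * M j i = 4 * (cos (pi / real k))^2) = 2"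
    by (rule Least_equality) (auto simp: assms(2))
  then show ?thesis using ex assms(1) by (simp add: coxeter_m_def)
qed

lemma dihedral_nonneg:
  assumes "is_EGCM M" "s \<noteq> t" "\<forall>m. coxeter_m M s t = Some m \<longrightarrow> k < m"
  shows "\<exists>p q. p \<ge> 0 \<and> q \<ge> 0 \<and> word_act M (altw s t k) (simple_root s) = vec2 s t p q"
proof -
  have mts: "- M t s \<ge> 0" using egcm_offdiag[OF assms(1), of t s] assms(2) by simp
  have mst: "- M s t \<ge> 0" using egcm_offdiag[OF assms(1), of s t] assms(2) by simp
  show ?thesis
  proof (cases "M s t * M t s = 0")
    case True
    then have "k < 2" using assms(3) cm_exists_zero[OF assms(2)] by blast
    then consider "k = 0" | "k = 1" by linarith
    then show ?thesis
    proof cases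
      case 1 then show ?thesis by (intro exI[of _ 1] exI[of _ 0]) (simp add: vec2_simple[of s t])
    next
      case 2
      have "word_act M (altw s t k) (simple_root s) = vec2 s t 1 (- 0 - M t s * 1)"
        using 2 refl_vec2_t[of s t M 1 0] assms(2) egcm_diag[OF assms(1)] by (simp add: vec2_simple[of s t])
      then show ?thesis using mts by (intro exI[of _ 1] exI[of _ "- M t s"]) simp
    qed
  next
    case False
    then have pp: "M s t * M t s > 0" using egcm_prod_nonneg[OF assms(1,2)] by linarith
    show ?thesis
    proof (cases "coxeter_m M s t")
      case None
      have p4: "M s t * M t s \<ge> 4" using cm_None[OF assms(1,2) None] .
      define d where "d = sqrt (M s t * M t s)"
      define K where "K = - M t s / d"
      have d2: "d \<ge> 2" unfolding d_def using p4 real_sqrt_le_mono[of 4] by simp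
      have dd: "d * d = M s t * M t s" unfolding d_def using pp by simp
      have e: "word_act M (altw s t k) (simple_root s) =
        (if even k then vec2 s t (tseq d (Suc k)) (K * tseq d k) else vec2 s t (tseq d k) (K * tseq d (Suc k)))"
        using dihedral_seq[of s t M d K k] assms(2) egcm_diag[OF assms(1)] d2 dd by (simp add: K_def)
      have K0: "K \<ge> 0" unfolding K_def using d2 mts by (simp add: divide_nonpos_pos)
      have t0: "tseq d k \<ge> 0" "tseq d (Suc k) \<ge> 0" using tseq_ge2[OF d2] by auto
      show ?thesis
      proof (cases "even k")
        case True then show ?thesis using e K0 t0
          by (intro exI[of _ "tseq d (Suc k)"] exI[of _ "K * tseq d k"]) simp
      next
        case False then show ?thesis using e K0 t0
          by (intro exI[of _ "tseq d k"] exI[of _ "K * tseq d (Suc k)"]) simp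
      qed
    next
      case (Some m)
      then have km: "k < m" using assms(3) by simp
      note st = product_pos_setup[OF assms(1,2) Some pp]
      define d where "d = 2 * cos (pi / real m)"
      define K where "K = - M t s / d"
      have e: "word_act M (altw s t k) (simple_root s) =
        (if even k then vec2 s t (tseq d (Suc k)) (K * tseq d k) else vec2 s t (tseq d k) (K * tseq d (Suc k)))"
        using dihedral_seq[of s t M d K k] assms(2) egcm_diag[OF assms(1)] st by (simp add: K_def d_def)
      have "d > 0" using st by (simp add: d_def)
      then have K0: "K \<ge> 0" unfolding K_def using mts by (intro divide_nonneg_pos) auto
      have t0: "tseq d k \<ge> 0" "tseq d (Suc k) \<ge> 0" using tseq_m(5)[of m] st km by (auto simp: d_def)
      show ?thesis
      proof (cases "even k")
        case True then show ?thesis using e K0 t0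
          by (intro exI[of _ "tseq d (Suc k)"] exI[of _ "K * tseq d k"]) simp
      next
        case False then show ?thesis using e K0 t0
          by (intro exI[of _ "tseq d k"] exI[of _ "K * tseq d (Suc k)"]) simp
      qed
    qed
  qed
qed

fun alt :: "'n \<Rightarrow> 'n \<Rightarrow> nat \<Rightarrow> 'n list" where
  "alt a b 0 = []"
| "alt a b (Suc k) = a # alt b a k"

lemma alt_add: "alt a b (j + k) = alt a b j @ (if even j then alt a b k else alt b a k)"
  by (induction j arbitrary: a b) auto

lemma rev_alt: "rev (alt a b k) = (if even k then alt b a k else alt a b k)"
proof (induction k arbitrary: a b)
  case 0 then show ?case by simp
next
  case (Suc k)
  have "alt b a (Suc k) = alt b a k @ (if even k then [b] else [a])"
    using alt_add[of b a k 1] by (simp add: numeral_2_eq_2)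
  moreover have "alt a b (Suc k) = alt a b k @ (if even k then [a] else [b])"
    using alt_add[of a b k 1] by simp
  ultimately show ?case using Suc by auto
qed

lemma alt_double: "alt a b (2 * m) = concat (replicate m [a, b])"
proof (induction m)
  case 0 then show ?case by simp
next
  case (Suc m)
  have e: "2 * Suc m = Suc (Suc (2 * m))" by simp
  show ?case unfolding e using Suc by simp
qed

lemma altw_alt: "altw s t k = (if even k then alt s t k else alt t s k)"
  by (induction k) auto

lemma braid:
  assumes "s \<noteq> t" "coxeter_m M s t = Some m"
  shows "cox_eq M (alt s t m) (alt t s m)"
proof -
  have r: "concat (replicate m [s, t]) \<in> coxeter_relators M"
    using assms unfolding coxeter_relators_def by blast
  have "cox_eq M (concat (replicate m [s, t])) []"
    using cox_eq.cox_rel[OF r, of "[]" "[]"] by simp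
  moreover have "alt s t (2 * m) = alt s t m @ rev (alt t s m)"
    using alt_add[of s t m m] rev_alt[of t s m] by (simp add: mult_2)
  ultimately have z: "cox_eq M (alt s t m @ rev (alt t s m)) []" by (simp add: alt_double)
  have "cox_eq M (alt s t m @ rev (alt t s m) @ alt t s m) ([] @ alt t s m)"
    using cox_eq_app_right[OF z, of "alt t s m"] by simp
  then have h1: "cox_eq M (alt s t m @ rev (alt t s m) @ alt t s m) (alt t s m)" by simp
  have h2: "cox_eq M (alt s t m @ rev (alt t s m) @ alt t s m) (alt s t m)"
    using cox_eq_context[OF cox_eq_inv'[of M "alt t s m"], of "alt s t m" "[]"] by simp
  show ?thesis using cox_eq.cox_trans[OF cox_eq.cox_sym[OF h2] h1] .
qed

lemma braidw:
  assumes "s \<noteq> t" "coxeter_m M s t = Some m"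
  shows "cox_eq M (altw s t m) (altw t s m)"
  using braid[OF assms] cox_eq.cox_sym unfolding altw_alt by auto

lemma altw_suffix: "\<exists>P. set P \<subseteq> {s, t} \<and> length P = j \<and> altw s t (j + m) = P @ altw s t m"
proof (induction j)
  case 0 then show ?case by simp
next
  case (Suc j)
  then obtain P where "set P \<subseteq> {s, t}" "length P = j" "altw s t (j + m) = P @ altw s t m" by blast
  then show ?case by (intro exI[of _ "(if even (j + m) then t else s) # P"]) auto
qed

lemma altw_last: "\<exists>P. set P \<subseteq> {a, b} \<and> length P = k \<and> altw a b (Suc k) = P @ [b]"
proof (induction k)
  case 0 then show ?case by simp
next
  case (Suc k)
  then obtain P where "set P \<subseteq> {a, b}" "length P = k" "altw a b (Suc k) = P @ [b]" by blast
  then show ?case by (intro exI[of _ "(if even (Suc k) then b else a) # P"]) auto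
qed


lemma no_adj_alt:
  assumes "s \<noteq> t"
  shows "set u \<subseteq> {s, t} \<Longrightarrow> (\<forall>a x b. u \<noteq> a @ [x, x] @ b) \<Longrightarrow> (u = [] \<or> last u = t)
    \<Longrightarrow> u = altw s t (length u)"
proof (induction u)
  case Nil then show ?case by simp
next
  case (Cons x u')
  have h1: "set u' \<subseteq> {s, t}" using Cons.prems(1) by simp
  have h2: "\<forall>a y b. u' \<noteq> a @ [y, y] @ b"
  proof (intro allI notI)
    fix a y b assume "u' = a @ [y, y] @ b"
    then have "x # u' = (x # a) @ [y, y] @ b" by simp
    then show False using Cons.prems(2) by blast
  qed
  show ?case
  proof (cases "u' = []")
    case True
    then have "x = t" using Cons.prems(3) by simp
    then show ?thesis using True by simp
  next
    case False
    then have h3: "u' = [] \<or> last u' = t" using Cons.prems(3) by simp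
    have IH: "u' = altw s t (length u')" using Cons.IH[OF h1 h2 h3] .
    obtain k' where k': "length u' = Suc k'" using False by (cases u') auto
    then have u': "u' = (if even k' then t else s) # altw s t k'" using IH by simp
    have "x \<noteq> (if even k' then t else s)"
    proof
      assume "x = (if even k' then t else s)"
      then have "x # u' = [] @ [x, x] @ altw s t k'" using u' by simp
      then show False using Cons.prems(2) by blast
    qed
    moreover have "x \<in> {s, t}" using Cons.prems(1) by simp
    ultimately have "x = (if even (Suc k') then t else s)" using assms by auto
    then show ?thesis using IH k' by simp
  qed
qed

lemma DL:
  assumes E: "is_EGCM M" and st: "s \<noteq> t" and u: "set u \<subseteq> {s, t}"
    and red: "lenI M {s, t} u = length u" and asc: "length u \<le> lenI M {s, t} (u @ [s])"
  shows "\<exists>p q. p \<ge> 0 \<and> q \<ge> 0 \<and> word_act M u (simple_root s) = vec2 s t p q"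
proof -
  have noadj: "\<forall>a x b. u \<noteq> a @ [x, x] @ b"
  proof (intro allI notI)
    fix a x b assume ua: "u = a @ [x, x] @ b"
    then have "cox_eq M u (a @ b)" using cox_eq_ss by simp
    moreover have "set (a @ b) \<subseteq> {s, t}" using u ua by auto
    ultimately have "lenI M {s, t} u \<le> length (a @ b)" using lenI_le[of "a @ b" "{s, t}" M u] by blast
    then show False using red ua by simp
  qed
  have lst: "u = [] \<or> last u = t"
  proof (rule ccontr)
    assume "\<not> (u = [] \<or> last u = t)"
    then have ne: "u \<noteq> []" and lt: "last u \<noteq> t" by auto
    have "last u \<in> {s, t}" using u last_in_set[OF ne] by blast
    then have ls: "last u = s" using lt by blast
    obtain v where ub: "u = v @ [s]" using append_butlast_last_id[OF ne] ls by metis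
    have "cox_eq M (v @ [s, s] @ []) (v @ [])" by (rule cox_eq_ss)
    then have "cox_eq M (u @ [s]) v" using ub by simp
    moreover have "set v \<subseteq> {s, t}" using u ub by auto
    ultimately have "lenI M {s, t} (u @ [s]) \<le> length v" using lenI_le[of v "{s, t}" M "u @ [s]"] by blast
    then show False using asc ub by simp
  qed
  define k where "k = length u"
  have ua: "u = altw s t k" unfolding k_def by (rule no_adj_alt[OF st u noadj lst])
  have km: "\<forall>m. coxeter_m M s t = Some m \<longrightarrow> k < m"
  proof (intro allI impI)
    fix m assume cm: "coxeter_m M s t = Some m"
    have m2: "m \<ge> 2" using cm_Some[OF st cm] by simp
    show "k < m"
    proof (rule ccontr)
      assume "\<not> k < m"
      then have kk: "k = (k - m) + m" by simp
      obtain P where P: "set P \<subseteq> {s, t}" "length P = k - m" "altw s t ((k - m) + m) = P @ altw s t m"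
        using altw_suffix[of s t "k - m" m] by (elim exE conjE) 
      obtain Q where Q: "set Q \<subseteq> {t, s}" "length Q = m - 1" "altw t s (Suc (m - 1)) = Q @ [s]"
        using altw_last[of t s "m - 1"] by (elim exE conjE)
      have Q': "altw t s m = Q @ [s]" using Q(3) m2 by simp
      have u2: "u = P @ altw s t m" using ua P(3) kk by simp
      have "cox_eq M (P @ altw s t m @ [s]) (P @ altw t s m @ [s])"
        using cox_eq_context[OF braidw[OF st cm], of P "[s]"] .
      also have "P @ altw t s m @ [s] = (P @ Q) @ [s, s] @ []" using Q' by simp
      finally have c1: "cox_eq M (u @ [s]) ((P @ Q) @ [s, s] @ [])" using u2 by simp
      have "cox_eq M (u @ [s]) (P @ Q)"
        using cox_eq.cox_trans[OF c1 cox_eq_ss[of M "P @ Q" s "[]"]] by simp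
      moreover have "set (P @ Q) \<subseteq> {s, t}" using P(1) Q(1) by auto
      ultimately have "lenI M {s, t} (u @ [s]) \<le> length (P @ Q)" using lenI_le[of "P @ Q" "{s, t}" M "u @ [s]"] by blast
      then have "length u \<le> length P + length Q" using asc by simp
      then show False using P(2) Q(2) m2 \<open>\<not> k < m\<close> k_def by linarith
    qed
  qed
  show ?thesis using dihedral_nonneg[OF E st km] ua by simp
qed

section \<open>Positivity of roots\<close>

definition posv :: "('n \<Rightarrow> real) \<Rightarrow> bool" where
  "posv v = (\<forall>k. 0 \<le> v k)"

lemma dich:
  assumes E: "is_EGCM M"
  shows "len M w < len M (w @ [s]) \<Longrightarrow> posv (word_act M w (simple_root s))"
proof (induction "len M w" arbitrary: w s rule: less_induct)
  case (less w s)
  define n where "n = len M w"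
  show ?case
  proof (cases "n = 0")
    case True
    then have "cox_eq M w []" using len_0 n_def by simp
    then have "word_act M w = word_act M []" using cox_eq_act[OF E] by blast
    then show ?thesis by (simp add: posv_def simple_root_def)
  next
    case False
    obtain w' where w': "cox_eq M w w'" "length w' = n" using len_ex[of M w] n_def by blast
    have "w' \<noteq> []" using w' False by auto
    then obtain w'' t where wt: "w' = w'' @ [t]" by (metis rev_exhaust)
    have l1: "len M w'' \<le> n - 1" using len_le_length[of M w''] w'(2) wt by simp
    have "n = len M w'" using len_cong[OF w'(1)] n_def by simp
    also have "\<dots> \<le> len M w'' + len M [t]" using len_app[of M w'' "[t]"] wt by simp
    finally have l2: "n \<le> len M w'' + 1" using len_single[of M t] by simp
    have lw: "len M w'' = n - 1" using l1 l2 by simp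
    have ts: "t \<noteq> s"
    proof
      assume "t = s"
      have "cox_eq M (w @ [s]) (w' @ [s])" using cox_eq_app_right[OF w'(1)] .
      also have "w' @ [s] = w'' @ [s, s] @ []" using wt \<open>t = s\<close> by simp
      finally have "cox_eq M (w @ [s]) w''" using cox_eq.cox_trans cox_eq_ss[of M w'' s "[]"] by fastforce
      then have "len M (w @ [s]) = n - 1" using len_cong lw by metis
      then show False using less.prems n_def by simp
    qed
    define I where "I = {s, t}"
    define A where "A v u \<longleftrightarrow> set u \<subseteq> I \<and> cox_eq M w (v @ u) \<and> len M v + lenI M I u \<le> n" for v u
    have A0: "A w'' [t]"
    proof -
      have "lenI M I [t] \<le> length [t]" by (rule lenI_le) (auto simp: I_def intro: cox_eq.cox_refl)
      then show ?thesis unfolding A_def using w' wt lw False by (auto simp: I_def)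
    qed
    have Alow: "len M v + lenI M I u = n" if "A v u" for v u
    proof -
      have a: "set u \<subseteq> I" "cox_eq M w (v @ u)" "len M v + lenI M I u \<le> n" using that unfolding A_def by auto
      have "n = len M (v @ u)" using len_cong[OF a(2)] n_def by simp
      also have "\<dots> \<le> len M v + len M u" by (rule len_app)
      also have "\<dots> \<le> len M v + lenI M I u" using len_le_lenI[OF a(1)] by simp
      finally show ?thesis using a(3) by simp
    qed
    define k0 where "k0 = (LEAST k. \<exists>v u. A v u \<and> len M v = k)"
    have ex0: "\<exists>k v u. A v u \<and> len M v = k" using A0 by blast
    obtain v u where vu: "A v u" "len M v = k0"
      using LeastI_ex[OF ex0] unfolding k0_def by blast
    have kmin: "k0 \<le> len M v'" if "A v' u'" for v' u'
      unfolding k0_def by (rule Least_le) (use that in blast)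
    have k0n: "k0 < n" using kmin[OF A0] lw False by simp
    have vu': "set u \<subseteq> I" "cox_eq M w (v @ u)" "len M v + lenI M I u = n"
      using vu(1) Alow[OF vu(1)] unfolding A_def by auto
    have asc: "len M v < len M (v @ [x])" if x: "x \<in> I" for x
    proof (rule ccontr)
      assume "\<not> len M v < len M (v @ [x])"
      then have d: "Suc (len M (v @ [x])) = len M v" using len_snoc[of M v x] by linarith
      have "A (v @ [x]) (x # u)"
      proof -
        have s1: "set (x # u) \<subseteq> I" using vu'(1) x by simp
        have "cox_eq M (v @ [x, x] @ u) (v @ u)" by (rule cox_eq_ss)
        then have "cox_eq M (v @ u) ((v @ [x]) @ (x # u))" using cox_eq.cox_sym by fastforce
        then have s2: "cox_eq M w ((v @ [x]) @ (x # u))" using vu'(2) cox_eq.cox_trans by blast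
        have "lenI M I (x # u) \<le> Suc (lenI M I u)" by (rule lenI_Cons[OF vu'(1) x])
        then have s3: "len M (v @ [x]) + lenI M I (x # u) \<le> n" using d vu'(3) by simp
        show ?thesis unfolding A_def using s1 s2 s3 by blast
      qed
      then have "k0 \<le> len M (v @ [x])" by (rule kmin)
      then show False using d vu(2) by simp
    qed
    have IHs: "posv (word_act M v (simple_root x))" if "x \<in> I" for x
      using less.hyps[of v x] asc[OF that] vu(2) k0n n_def by simp
    obtain ur where ur: "set ur \<subseteq> I" "cox_eq M u ur" "length ur = lenI M I u"
      using lenI_ex[OF vu'(1), of M] by blast
    have red: "lenI M I ur = length ur" using lenI_cong[OF ur(2) vu'(1) ur(1)] ur(3) by simp
    have wvur: "cox_eq M w (v @ ur)" using cox_eq.cox_trans[OF vu'(2) cox_eq_app_left[OF ur(2)]] .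
    have ascur: "length ur \<le> lenI M I (ur @ [s])"
    proof (rule ccontr)
      assume "\<not> length ur \<le> lenI M I (ur @ [s])"
      then have lt: "lenI M I (ur @ [s]) < length ur" by simp
      have sI: "set (ur @ [s]) \<subseteq> I" using ur(1) by (simp add: I_def)
      obtain z where z: "set z \<subseteq> I" "cox_eq M (ur @ [s]) z" "length z = lenI M I (ur @ [s])"
        using lenI_ex[OF sI, of M] by blast
      have "cox_eq M (w @ [s]) ((v @ ur) @ [s])" using cox_eq_app_right[OF wvur] .
      then have "cox_eq M (w @ [s]) (v @ z)" using cox_eq.cox_trans cox_eq_app_left[OF z(2), of v] by fastforce
      then have "len M (w @ [s]) = len M (v @ z)" by (rule len_cong)
      also have "\<dots> \<le> len M v + len M z" by (rule len_app)
      also have "\<dots> \<le> len M v + length z" using len_le_length[of M z] by simp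
      finally have "len M (w @ [s]) < n" using lt z(3) ur(3) vu'(3) by simp
      then show False using less.prems n_def by simp
    qed
    have st: "s \<noteq> t" using ts by simp
    obtain p q where pq: "p \<ge> 0" "q \<ge> 0" "word_act M ur (simple_root s) = vec2 s t p q"
      using DL[OF E st ur(1)[unfolded I_def] red[unfolded I_def] ascur[unfolded I_def]] by blast
    have "word_act M w = word_act M (v @ ur)" using cox_eq_act[OF E wvur] .
    then have "word_act M w (simple_root s) = word_act M v (vec2 s t p q)"
      by (simp add: word_act_append pq(3))
    also have "\<dots> = (\<lambda>k. p * word_act M v (simple_root s) k + q * word_act M v (simple_root t) k)"
      unfolding vec2_def by (rule word_act_lin)
    finally show ?thesis using IHs[of s] IHs[of t] pq(1,2) unfolding posv_def I_def by simp
  qed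
qed


lemma fS_simple: "fS M i (simple_root j) = M i j"
proof -
  have "fS M i (simple_root j) = (\<Sum>k\<in>UNIV. if k = j then M i j else 0)"
    unfolding fS_def simple_root_def by (rule sum.cong) auto
  then show ?thesis by simp
qed

lemma refl_simple: "M s s = 2 \<Longrightarrow> refl_act M s (simple_root s) = (\<lambda>k. - simple_root s k)"
  unfolding refl_act_alt fS_simple by (auto simp: simple_root_def)

lemma word_act_zero: "word_act M ws (\<lambda>k. 0) = (\<lambda>k. 0)"
  using word_act_scale[of M ws 0 "\<lambda>k. 0"] by simp

lemma root_ne0:
  assumes E: "is_EGCM M"
  shows "word_act M w (simple_root s) \<noteq> (\<lambda>k. 0)"
proof
  assume "word_act M w (simple_root s) = (\<lambda>k. 0)"
  then have "word_act M w (simple_root s) = word_act M w (\<lambda>k. 0)" by (simp add: word_act_zero)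
  then have "simple_root s = (\<lambda>k. 0)" using word_act_inj[where M=M, OF egcm_diag_all[OF E]] by blast
  then show False using simple_root_ne0[of s] by simp
qed

lemma posv_both:
  assumes "posv v" "posv (\<lambda>k. - v k)"
  shows "v = (\<lambda>k. 0)"
proof (rule ext)
  fix k
  have "0 \<le> v k" "0 \<le> - v k" using assms unfolding posv_def by auto
  then show "v k = 0" by linarith
qed

lemma dich_neg:
  assumes E: "is_EGCM M" and lt: "len M (w @ [s]) < len M w"
  shows "posv (\<lambda>k. - word_act M w (simple_root s) k)"
proof -
  have "cox_eq M ((w @ [s]) @ [s]) w" using cox_eq_ss[of M w s "[]"] by simp
  then have "len M ((w @ [s]) @ [s]) = len M w" by (rule len_cong)
  then have "posv (word_act M (w @ [s]) (simple_root s))" using dich[OF E, of "w @ [s]" s] lt by simp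
  moreover have "word_act M (w @ [s]) (simple_root s) = (\<lambda>k. - word_act M w (simple_root s) k)"
    by (simp add: word_act_append refl_simple[OF egcm_diag[OF E]] word_act_neg)
  ultimately show ?thesis by simp
qed

lemma root_dich:
  assumes E: "is_EGCM M"
  shows "posv (word_act M w (simple_root s)) \<or> posv (\<lambda>k. - word_act M w (simple_root s) k)"
  using len_snoc[of M w s] dich[OF E, of w s] dich_neg[OF E, of w s] by auto

lemma asc_iff:
  assumes E: "is_EGCM M"
  shows "len M w < len M (w @ [s]) \<longleftrightarrow> posv (word_act M w (simple_root s))"
proof
  assume "posv (word_act M w (simple_root s))"
  moreover have "\<not> (posv (word_act M w (simple_root s)) \<and> posv (\<lambda>k. - word_act M w (simple_root s) k))"
    using posv_both root_ne0[OF E] by blast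
  ultimately show "len M w < len M (w @ [s])" using dich_neg[OF E, of w s] len_snoc[of M w s] by auto
qed (rule dich[OF E])

lemma last_descent:
  assumes "0 < len M w"
  shows "\<exists>w'' s. cox_eq M w (w'' @ [s]) \<and> len M w'' < len M (w'' @ [s]) \<and> len M (w'' @ [s]) = len M w"
proof -
  obtain w' where w': "cox_eq M w w'" "length w' = len M w" using len_ex[of M w] by blast
  have "w' \<noteq> []" using w' assms by auto
  then obtain w'' t where wt: "w' = w'' @ [t]" by (metis rev_exhaust)
  have l1: "len M w'' \<le> len M w - 1" using len_le_length[of M w''] w'(2) wt by simp
  have e: "len M (w'' @ [t]) = len M w" using len_cong[OF w'(1)] wt by simp
  then have "len M w'' < len M (w'' @ [t])" using l1 assms by simp
  then show ?thesis using w' wt e by blast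
qed

lemma faithful:
  assumes E: "is_EGCM M" and id: "\<forall>v. word_act M w v = v"
  shows "cox_eq M w []"
proof (cases "len M w = 0")
  case True then show ?thesis by (rule len_0)
next
  case False
  then obtain w'' s where d: "cox_eq M w (w'' @ [s])" "len M w'' < len M (w'' @ [s])"
    using last_descent[of M w] by blast
  have p: "posv (word_act M w'' (simple_root s))" using dich[OF E d(2)] .
  have "word_act M (w'' @ [s]) (simple_root s) = simple_root s"
    using cox_eq_act[OF E d(1)] id by metis
  then have "(\<lambda>k. - word_act M w'' (simple_root s) k) = simple_root s"
    by (simp add: word_act_append refl_simple[OF egcm_diag[OF E]] word_act_neg)
  then have "- word_act M w'' (simple_root s) s = 1" by (metis simple_root_def)
  then show ?thesis using p unfolding posv_def by (metis neg_le_0_iff_le not_one_le_zero)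
qed

section \<open>Pairing and the numbers game\<close>

definition pair :: "('n::finite \<Rightarrow> real) \<Rightarrow> ('n \<Rightarrow> real) \<Rightarrow> real" where
  "pair lam v = (\<Sum>k\<in>UNIV. lam k * v k)"

lemma pair_fire: "pair (fire M i lam) v = pair lam (refl_act M i v)"
proof -
  have "pair (fire M i lam) v = (\<Sum>k\<in>UNIV. lam k * v k - lam i * (M i k * v k))"
    unfolding pair_def fire_def by (rule sum.cong) (auto simp: algebra_simps)
  also have "\<dots> = pair lam v - lam i * fS M i v"
    by (simp add: sum_subtractf pair_def fS_def sum_distrib_left)
  also have "\<dots> = (\<Sum>k\<in>UNIV. lam k * v k - (if k = i then lam i * fS M i v else 0))"
    by (simp add: sum_subtractf pair_def)
  also have "\<dots> = pair lam (refl_act M i v)"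
    unfolding pair_def refl_act_alt by (rule sum.cong) (auto simp: algebra_simps)
  finally show ?thesis .
qed

lemma play_Cons: "play M lam (i # ws) = play M (fire M i lam) ws"
  by (simp add: play_def)

lemma play_pair: "pair (play M lam ws) v = pair lam (word_act M ws v)"
proof (induction ws arbitrary: lam)
  case Nil then show ?case by (simp add: play_def)
next
  case (Cons i ws)
  show ?case by (simp add: play_Cons Cons pair_fire)
qed

lemma pair_simple: "pair lam (simple_root j) = lam j"
proof -
  have "pair lam (simple_root j) = (\<Sum>k\<in>UNIV. if k = j then lam j else 0)"
    unfolding pair_def simple_root_def by (rule sum.cong) auto
  then show ?thesis by simp
qed

lemma play_coord: "play M lam ws j = pair lam (word_act M ws (simple_root j))"
  using play_pair[of M lam ws "simple_root j"] pair_simple by metis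

lemma legal_pos: "legal_play M lam seq \<Longrightarrow> k < length seq \<Longrightarrow> play M lam (take k seq) (seq ! k) > 0"
proof (induction seq arbitrary: lam k)
  case Nil then show ?case by simp
next
  case (Cons i xs)
  show ?case
  proof (cases k)
    case 0 then show ?thesis using Cons.prems by (simp add: play_def)
  next
    case (Suc k')
    then show ?thesis using Cons.prems Cons.IH[of "fire M i lam" k'] by (simp add: play_Cons)
  qed
qed

lemma pair_pos:
  assumes "strongly_dominant lam" "posv v" "v \<noteq> (\<lambda>k. 0)"
  shows "pair lam v > 0"
proof -
  obtain j where j: "v j \<noteq> 0" using assms(3) by auto
  then have "v j > 0" using assms(2) unfolding posv_def by (metis order_le_less)
  then have "lam j * v j > 0" using assms(1) unfolding strongly_dominant_def by simp
  moreover have "\<forall>k\<in>UNIV. 0 \<le> lam k * v k"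
    using assms(1,2) unfolding strongly_dominant_def posv_def by (simp add: less_imp_le)
  ultimately show ?thesis unfolding pair_def by (intro sum_pos2[where i=j]) auto
qed

lemma pair_neg:
  assumes "strongly_dominant lam" "posv (\<lambda>k. - v k)"
  shows "pair lam v \<le> 0"
proof -
  have "\<forall>k\<in>UNIV. lam k * v k \<le> 0"
    using assms unfolding strongly_dominant_def posv_def by (simp add: mult_pos_neg less_imp_le mult_nonneg_nonpos)
  then show ?thesis unfolding pair_def by (simp add: sum_nonpos)
qed

lemma word_act_sum:
  assumes "finite A"
  shows "word_act M ws (\<lambda>l. \<Sum>k\<in>A. c k * u k l) = (\<lambda>l. \<Sum>k\<in>A. c k * word_act M ws (u k) l)"
  using assms
proof (induction A rule: finite_induct)
  case empty then show ?case by (simp add: word_act_zero)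
next
  case (insert x F)
  have "(\<lambda>l. \<Sum>k\<in>insert x F. c k * u k l) = (\<lambda>l. c x * u x l + 1 * (\<Sum>k\<in>F. c k * u k l))"
    using insert by simp
  then have "word_act M ws (\<lambda>l. \<Sum>k\<in>insert x F. c k * u k l)
      = (\<lambda>l. c x * word_act M ws (u x) l + 1 * word_act M ws (\<lambda>l. \<Sum>k\<in>F. c k * u k l) l)"
    by (simp only: word_act_lin)
  also have "\<dots> = (\<lambda>l. \<Sum>k\<in>insert x F. c k * word_act M ws (u k) l)"
    using insert by simp
  finally show ?case .
qed

lemma word_act_expand: "word_act M ws v = (\<lambda>l. \<Sum>k\<in>UNIV. v k * word_act M ws (simple_root k) l)"
proof -
  have "v = (\<lambda>l. \<Sum>k\<in>UNIV. v k * simple_root k l)"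
  proof (rule ext)
    fix l
    have "(\<Sum>k\<in>UNIV. v k * simple_root k l) = (\<Sum>k\<in>UNIV. if k = l then v l else 0)"
      unfolding simple_root_def by (rule sum.cong) auto
    then show "v l = (\<Sum>k\<in>UNIV. v k * simple_root k l)" by simp
  qed
  then show ?thesis using word_act_sum[of UNIV M ws v simple_root] by simp
qed

locale game =
  fixes M :: "'n::finite \<Rightarrow> 'n \<Rightarrow> real" and lam :: "'n \<Rightarrow> real" and seq :: "'n list"
  assumes E: "is_EGCM M" and SD: "strongly_dominant lam" and GS: "game_sequence M lam seq"
begin

definition beta :: "nat \<Rightarrow> ('n \<Rightarrow> real)" where
  "beta k = word_act M (take k seq) (simple_root (seq ! k))"

lemma beta_pos: "k < length seq \<Longrightarrow> posv (beta k)"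
proof -
  assume k: "k < length seq"
  have "pair lam (beta k) > 0"
    using legal_pos[of M lam seq k] GS k unfolding game_sequence_def beta_def play_coord by simp
  moreover have "posv (beta k) \<or> posv (\<lambda>l. - beta k l)" unfolding beta_def by (rule root_dich[OF E])
  ultimately show ?thesis using pair_neg[OF SD] by force
qed

lemma len_take: "k \<le> length seq \<Longrightarrow> len M (take k seq) = k"
proof (induction k)
  case 0 then show ?case by simp
next
  case (Suc k)
  then have k: "k < length seq" by simp
  have t: "take (Suc k) seq = take k seq @ [seq ! k]" using k by (simp add: take_Suc_conv_app_nth)
  have "len M (take k seq) < len M (take k seq @ [seq ! k])"
    using asc_iff[OF E] beta_pos[OF k] unfolding beta_def by blast
  then show ?case using len_snoc[of M "take k seq" "seq ! k"] Suc k t by simp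
qed

lemma len_seq: "len M seq = length seq"
  using len_take[of "length seq"] by simp

lemma final_neg: "posv (\<lambda>l. - word_act M seq (simple_root j) l)"
proof -
  have "pair lam (word_act M seq (simple_root j)) \<le> 0"
    using GS unfolding game_sequence_def play_coord by simp
  then have "\<not> posv (word_act M seq (simple_root j))"
    using pair_pos[OF SD] root_ne0[OF E, of seq j] by force
  then show ?thesis using root_dich[OF E, of seq j] by blast
qed

lemma seq_neg: "posv v \<Longrightarrow> posv (\<lambda>l. - word_act M seq v l)"
proof -
  assume p: "posv v"
  have "word_act M seq v = (\<lambda>l. \<Sum>k\<in>UNIV. v k * word_act M seq (simple_root k) l)"
    by (rule word_act_expand)
  then have e: "(\<lambda>l. - word_act M seq v l) = (\<lambda>l. \<Sum>k\<in>UNIV. v k * (- word_act M seq (simple_root k) l))"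
    by (simp add: sum_negf[symmetric])
  show ?thesis unfolding e posv_def
  proof
    fix l
    show "0 \<le> (\<Sum>k\<in>UNIV. v k * (- word_act M seq (simple_root k) l))"
    proof (intro sum_nonneg)
      fix k
      have "0 \<le> v k" using p unfolding posv_def by simp
      moreover have "0 \<le> - word_act M seq (simple_root k) l" using final_neg[of k] unfolding posv_def by simp
      ultimately show "0 \<le> v k * (- word_act M seq (simple_root k) l)" by (rule mult_nonneg_nonneg)
    qed
  qed
qed

lemma inv_neg:
  assumes p: "posv (word_act M w (simple_root i))"
  shows "posv (\<lambda>l. - word_act M (rev seq) (word_act M w (simple_root i)) l)"
proof -
  let ?g = "word_act M w (simple_root i)"
  let ?d = "word_act M (rev seq) ?g"
  have d: "?d = word_act M (rev seq @ w) (simple_root i)" by (simp add: word_act_append)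
  have "\<not> posv ?d"
  proof
    assume "posv ?d"
    then have "posv (\<lambda>l. - word_act M seq ?d l)" by (rule seq_neg)
    moreover have "word_act M seq ?d = ?g" using word_act_rev'[where M=M] egcm_diag_all[OF E] by simp
    ultimately have "?g = (\<lambda>k. 0)" using posv_both p by simp
    then show False using root_ne0[OF E] by blast
  qed
  then show ?thesis using root_dich[OF E, of "rev seq @ w" i] d by simp
qed

lemma len_sum: "len M u + len M (rev u @ seq) = length seq"
proof (induction u rule: rev_induct)
  case Nil then show ?case using len_seq by simp
next
  case (snoc s u')
  define x where "x = rev u' @ seq"
  have r: "rev (u' @ [s]) @ seq = s # x" by (simp add: x_def)
  have lx: "len M (s # x) = len M (rev x @ [s])" using len_rev[of M "s # x"] by simp
  have rx: "len M (rev x) = len M x" by (rule len_rev)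
  have ax: "word_act M (rev x) (simple_root s) = word_act M (rev seq) (word_act M u' (simple_root s))"
    by (simp add: x_def word_act_append)
  show ?case
  proof (cases "posv (word_act M u' (simple_root s))")
    case True
    then have l1: "len M (u' @ [s]) = Suc (len M u')" using asc_iff[OF E, of u' s] len_snoc[of M u' s] by auto
    have "posv (\<lambda>l. - word_act M (rev x) (simple_root s) l)" using inv_neg[OF True] ax by simp
    then have "\<not> posv (word_act M (rev x) (simple_root s))"
      using posv_both root_ne0[OF E, of "rev x" s] by blast
    then have "Suc (len M (rev x @ [s])) = len M (rev x)"
      using asc_iff[OF E, of "rev x" s] len_snoc[of M "rev x" s] by auto
    then show ?thesis using snoc l1 r lx rx x_def by simp
  next
    case False
    then have l1: "Suc (len M (u' @ [s])) = len M u'" using asc_iff[OF E, of u' s] len_snoc[of M u' s] by auto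
    have n: "posv (\<lambda>l. - word_act M u' (simple_root s) l)" using root_dich[OF E, of u' s] False by blast
    have "word_act M (u' @ [s]) (simple_root s) = (\<lambda>l. - word_act M u' (simple_root s) l)"
      by (simp add: word_act_append refl_simple[OF egcm_diag[OF E]] word_act_neg)
    then have "posv (\<lambda>l. - word_act M (rev seq) (\<lambda>l. - word_act M u' (simple_root s) l) l)"
      using inv_neg[of "u' @ [s]" s] n by simp
    then have "posv (word_act M (rev x) (simple_root s))" using ax by (simp add: word_act_neg)
    then have "len M (rev x @ [s]) = Suc (len M (rev x))"
      using asc_iff[OF E, of "rev x" s] len_snoc[of M "rev x" s] by auto
    then show ?thesis using snoc l1 r lx rx x_def by simp
  qed
qed

lemma len_bound: "len M u \<le> length seq"
  using len_sum[of u] by simp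

lemma len_max: "len M u = length seq \<Longrightarrow> cox_eq M seq u"
proof -
  assume "len M u = length seq"
  then have "len M (rev u @ seq) = 0" using len_sum[of u] by simp
  then have z: "cox_eq M (rev u @ seq) []" by (rule len_0)
  have "cox_eq M (u @ (rev u @ seq)) (u @ [])" by (rule cox_eq_app_left[OF z])
  moreover have "cox_eq M ((u @ rev u) @ seq) ([] @ seq)" by (rule cox_eq_app_right[OF cox_eq_inv])
  ultimately show ?thesis using cox_eq.cox_trans cox_eq.cox_sym by fastforce
qed

lemma rays_distinct:
  assumes jk: "j < k" "k < length seq" and c: "c > 0" and eq: "beta k = (\<lambda>l. c * beta j l)"
  shows False
proof -
  define v where "v = drop (Suc j) (take k seq)"
  have tt: "take (Suc j) (take k seq) = take (Suc j) seq" using jk by (simp add: min_def)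
  have tk: "take k seq = take (Suc j) seq @ v"
    using append_take_drop_id[of "Suc j" "take k seq"] tt unfolding v_def by simp
  have tj: "take (Suc j) seq = take j seq @ [seq ! j]" using jk by (simp add: take_Suc_conv_app_nth)
  have lv: "length v = k - Suc j" unfolding v_def using jk by simp
  let ?R = "rev (take (Suc j) seq)"
  have D: "\<forall>i. M i i = 2" using egcm_diag_all[OF E] .
  have h1: "word_act M ?R (beta k) = word_act M v (simple_root (seq ! k))"
    unfolding beta_def tk word_act_append using word_act_rev[where M=M] D by simp
  have h2: "word_act M ?R (beta j) = (\<lambda>l. - simple_root (seq ! j) l)"
    unfolding beta_def tj using word_act_rev[where M=M] D refl_simple[of M "seq ! j"]
    by (simp add: word_act_append)
  have "word_act M v (simple_root (seq ! k)) = (\<lambda>l. c * - simple_root (seq ! j) l)"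
    using h1 h2 eq word_act_scale[of M ?R c "beta j"] by simp
  then have "\<not> posv (word_act M v (simple_root (seq ! k)))"
    using c unfolding posv_def by (auto simp: simple_root_def intro!: exI[of _ "seq ! j"])
  then have "\<not> len M v < len M (v @ [seq ! k])" using asc_iff[OF E] by blast
  then have d: "Suc (len M (v @ [seq ! k])) = len M v" using len_snoc[of M v "seq ! k"] by linarith
  have "take (Suc k) seq = take (Suc j) seq @ (v @ [seq ! k])"
    using jk tk by (simp add: take_Suc_conv_app_nth)
  then have "len M (take (Suc k) seq) \<le> len M (take (Suc j) seq) + len M (v @ [seq ! k])"
    using len_app[of M "take (Suc j) seq" "v @ [seq ! k]"] by simp
  moreover have "len M (take (Suc k) seq) = Suc k" using len_take jk by simp
  moreover have "len M (take (Suc j) seq) = Suc j" using len_take jk by simp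
  moreover have "len M v \<le> length v" by (rule len_le_length)
  ultimately show False using d lv jk by linarith
qed

lemma refl_pos_neg:
  assumes "posv u" "posv (\<lambda>l. - refl_act M i u l)"
  shows "u = (\<lambda>l. u i * simple_root i l)"
proof (rule ext)
  fix l
  show "u l = u i * simple_root i l"
  proof (cases "l = i")
    case True then show ?thesis by (simp add: simple_root_def)
  next
    case False
    then have "refl_act M i u l = u l" by (simp add: refl_act_alt)
    moreover have "0 \<le> - refl_act M i u l" using assms(2) unfolding posv_def by simp
    ultimately have "0 \<le> u l" "0 \<le> - u l" using assms(1) unfolding posv_def by auto
    then show ?thesis using False by (simp add: simple_root_def)
  qed
qed

lemma pos_root_beta:
  assumes p: "posv (word_act M w (simple_root i))"
  shows "\<exists>k c. k < length seq \<and> c > 0 \<and> word_act M w (simple_root i) = (\<lambda>l. c * beta k l)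
     \<and> word_act M (rev (take k seq)) (word_act M w (simple_root i)) = (\<lambda>l. c * simple_root (seq ! k) l)"
proof -
  let ?g = "word_act M w (simple_root i)"
  define g where "g k = word_act M (rev (take k seq)) ?g" for k
  have groot: "g k = word_act M (rev (take k seq) @ w) (simple_root i)" for k
    by (simp add: g_def word_act_append)
  have gl: "\<not> posv (g (length seq))"
  proof
    assume "posv (g (length seq))"
    moreover have "posv (\<lambda>l. - g (length seq) l)" using inv_neg[OF p] by (simp add: g_def)
    ultimately have "g (length seq) = (\<lambda>k. 0)" by (rule posv_both)
    then show False using root_ne0[OF E, of "rev (take (length seq) seq) @ w" i] groot[of "length seq"] by simp
  qed
  define k1 where "k1 = (LEAST k. \<not> posv (g k))"
  have k1a: "\<not> posv (g k1)" unfolding k1_def using LeastI[of "\<lambda>k. \<not> posv (g k)", OF gl] .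
  have k1b: "k1 \<le> length seq" unfolding k1_def using Least_le[of "\<lambda>k. \<not> posv (g k)", OF gl] .
  have k10: "k1 \<noteq> 0"
  proof
    assume "k1 = 0"
    then have "g k1 = ?g" by (simp add: g_def)
    then show False using k1a p by simp
  qed
  define k where "k = k1 - 1"
  have kk: "k1 = Suc k" "k < length seq" using k10 k1b by (auto simp: k_def)
  have pk: "posv (g k)" using not_less_Least[of k "\<lambda>k. \<not> posv (g k)"] kk unfolding k1_def by auto
  have rt: "rev (take (Suc k) seq) = seq ! k # rev (take k seq)" using kk by (simp add: take_Suc_conv_app_nth)
  have gs: "g (Suc k) = refl_act M (seq ! k) (g k)" unfolding g_def rt by simp
  have "\<not> posv (word_act M (rev (take (Suc k) seq) @ w) (simple_root i))" using k1a kk groot[of "Suc k"] by simp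
  then have "posv (\<lambda>l. - word_act M (rev (take (Suc k) seq) @ w) (simple_root i) l)"
    using root_dich[OF E, of "rev (take (Suc k) seq) @ w" i] by blast
  then have "posv (\<lambda>l. - g (Suc k) l)" using groot[of "Suc k"] by simp
  then have gk: "g k = (\<lambda>l. g k (seq ! k) * simple_root (seq ! k) l)"
    using refl_pos_neg[OF pk] gs by simp
  define c where "c = g k (seq ! k)"
  have "c \<ge> 0" using pk unfolding posv_def c_def by simp
  moreover have "c \<noteq> 0"
  proof
    assume "c = 0"
    then have "g k = (\<lambda>l. 0)" using gk c_def by simp
    then show False using root_ne0[OF E, of "rev (take k seq) @ w" i] groot[of k] by simp
  qed
  ultimately have c0: "c > 0" by simp
  have "?g = word_act M (take k seq) (g k)"
    unfolding g_def using word_act_rev'[where M=M] egcm_diag_all[OF E] by simp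
  also have "\<dots> = (\<lambda>l. c * beta k l)"
    unfolding beta_def c_def by (subst gk) (simp add: word_act_scale)
  finally have f1: "?g = (\<lambda>l. c * beta k l)" .
  have f2: "word_act M (rev (take k seq)) ?g = (\<lambda>l. c * simple_root (seq ! k) l)"
    using gk unfolding c_def g_def[symmetric] .
  show ?thesis using kk(2) c0 f1 f2 by blast
qed

definition cls :: "'n list \<Rightarrow> 'n list set" where
  "cls xs = {ys. cox_eq M xs ys}"

lemma longest: "longest_element M = cls seq" "coxeter_length M (longest_element M) = length seq"
proof -
  have mem: "c \<in> coxeter_group M \<longleftrightarrow> (\<exists>xs. c = cls xs)" for c
    by (auto simp: coxeter_group_def quotient_def Image_def cls_def)
  have cl: "coxeter_length M (cls xs) = len M xs" for xs
  proof -
    have "(\<lambda>k. k \<in> length ` cls xs) = (\<lambda>k. \<exists>ys. cox_eq M xs ys \<and> length ys = k)"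
      by (auto simp: cls_def)
    then show ?thesis unfolding coxeter_length_def len_def by simp
  qed
  have ceq: "cls xs = cls ys" if "cox_eq M xs ys" for xs ys
  proof -
    have "cox_eq M xs zs \<longleftrightarrow> cox_eq M ys zs" for zs
      using cox_eq.cox_trans[OF that, of zs] cox_eq.cox_trans[OF cox_eq.cox_sym[OF that], of zs] by blast
    then show ?thesis unfolding cls_def by blast
  qed
  let ?P = "\<lambda>w. w \<in> coxeter_group M \<and> (\<forall>w' \<in> coxeter_group M. coxeter_length M w' \<le> coxeter_length M w)"
  have P1: "?P (cls seq)"
  proof
    show "cls seq \<in> coxeter_group M" using mem by blast
    show "\<forall>w' \<in> coxeter_group M. coxeter_length M w' \<le> coxeter_length M (cls seq)"
    proof
      fix w' assume "w' \<in> coxeter_group M"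
      then obtain u where "w' = cls u" using mem by blast
      then show "coxeter_length M w' \<le> coxeter_length M (cls seq)" using cl len_bound[of u] len_seq by simp
    qed
  qed
  have P2: "w = cls seq" if "?P w" for w
  proof -
    have w: "w \<in> coxeter_group M" using that by simp
    obtain u where u: "w = cls u" using mem w by blast
    have "cls seq \<in> coxeter_group M" using P1 by simp
    then have "coxeter_length M (cls seq) \<le> coxeter_length M w" using that by simp
    then have "length seq \<le> len M u" using cl len_seq u by simp
    then have "len M u = length seq" using len_bound[of u] by simp
    then have "cox_eq M seq u" by (rule len_max)
    then show ?thesis using ceq u by simp
  qed
  show le: "longest_element M = cls seq"
    unfolding longest_element_def using the_equality[of ?P "cls seq", OF P1 P2] by simp
  show "coxeter_length M (longest_element M) = length seq" unfolding le cl len_seq ..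
qed

end

lemma word_act_range_finite:
  assumes E: "is_EGCM M" and F: "finite (coxeter_group M)"
  shows "finite (range (word_act M))"
proof -
  define rep where "rep c = (SOME xs. xs \<in> c)" for c :: "'a list set"
  have "range (word_act M) \<subseteq> (\<lambda>c. word_act M (rep c)) ` coxeter_group M"
  proof
    fix f assume "f \<in> range (word_act M)"
    then obtain xs where f: "f = word_act M xs" by blast
    let ?c = "{ys. cox_eq M xs ys}"
    have c: "?c \<in> coxeter_group M" by (auto simp: coxeter_group_def quotient_def Image_def)
    have "xs \<in> ?c" by (simp add: cox_eq.cox_refl)
    then have "rep ?c \<in> ?c" unfolding rep_def by (rule someI)
    then have "cox_eq M xs (rep ?c)" by simp
    then have "f = word_act M (rep ?c)" using f cox_eq_act[OF E] by simp
    then show "f \<in> (\<lambda>c. word_act M (rep c)) ` coxeter_group M" using c by blast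
  qed
  then show ?thesis using finite_subset finite_imageI[OF F] by blast
qed

lemma roots_finite:
  assumes E: "is_EGCM M" and F: "finite (coxeter_group M)"
  shows "finite (roots M)"
proof -
  have "roots M \<subseteq> (\<lambda>(f, i). f (simple_root i)) ` (range (word_act M) \<times> UNIV)"
    unfolding roots_def by auto
  moreover have "finite (range (word_act M) \<times> (UNIV :: 'a set))"
    using word_act_range_finite[OF E F] by simp
  ultimately show ?thesis using finite_subset by blast
qed

lemma pos_roots_finite:
  assumes E: "is_EGCM M" and F: "finite (coxeter_group M)"
  shows "finite (pos_roots M)"
  using roots_finite[OF E F] unfolding pos_roots_def by simp

lemma root_mem: "word_act M w (simple_root i) \<in> roots M"
  unfolding roots_def by blast

lemma pos_roots_iff: "v \<in> pos_roots M \<longleftrightarrow> v \<in> roots M \<and> posv v"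
  by (simp add: pos_roots_def posv_def)

lemma simple_pos: "simple_root x \<in> pos_roots M"
  using root_mem[of M "[]" x] unfolding pos_roots_iff posv_def by (simp add: simple_root_def)

section \<open>OA-paths\<close>

lemma oa_weight_snoc:
  assumes "ps \<noteq> []"
  shows "oa_weight M (ps @ [z]) = oa_weight M ps * oa_K M z (last ps)"
proof -
  obtain n where n: "length ps = Suc n" using assms by (cases ps) auto
  have l: "last ps = ps ! n" using n assms by (simp add: last_conv_nth)
  have "oa_weight M (ps @ [z]) = (\<Prod>k < Suc n. oa_K M ((ps @ [z]) ! (k + 1)) ((ps @ [z]) ! k))"
    unfolding oa_weight_def using n by simp
  also have "\<dots> = (\<Prod>k < n. oa_K M ((ps @ [z]) ! (k + 1)) ((ps @ [z]) ! k)) * oa_K M z (ps ! n)"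
    using n by (simp add: nth_append)
  also have "(\<Prod>k < n. oa_K M ((ps @ [z]) ! (k + 1)) ((ps @ [z]) ! k)) = (\<Prod>k < n. oa_K M (ps ! (k + 1)) (ps ! k))"
    by (rule prod.cong) (auto simp: nth_append n)
  finally show ?thesis unfolding oa_weight_def using n l by simp
qed

lemma oa_path_snoc:
  assumes "ps \<noteq> []"
  shows "oa_path M (ps @ [z]) \<longleftrightarrow> oa_path M ps \<and> odd_adjacent M (last ps) z"
proof -
  obtain n where n: "length ps = Suc n" using assms by (cases ps) auto
  have l: "last ps = ps ! n" using n assms by (simp add: last_conv_nth)
  have "oa_path M (ps @ [z]) \<longleftrightarrow> (\<forall>k < Suc n. odd_adjacent M ((ps @ [z]) ! k) ((ps @ [z]) ! (k + 1)))"
    unfolding oa_path_def using n by simp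
  also have "\<dots> \<longleftrightarrow> (\<forall>k < n. odd_adjacent M (ps ! k) (ps ! (k + 1))) \<and> odd_adjacent M (ps ! n) z"
  proof -
    have e1: "(ps @ [z]) ! k = ps ! k" if "k < Suc n" for k using that n by (simp add: nth_append)
    have e2: "(ps @ [z]) ! (k + 1) = ps ! (k + 1)" if "k < n" for k using that n by (simp add: nth_append)
    have e3: "(ps @ [z]) ! (n + 1) = z" using n by (simp add: nth_append)
    show ?thesis
    proof
      assume a: "\<forall>k < Suc n. odd_adjacent M ((ps @ [z]) ! k) ((ps @ [z]) ! (k + 1))"
      have "odd_adjacent M (ps ! k) (ps ! (k + 1))" if "k < n" for k
        using a[rule_format, of k] that e1[of k] e2[of k] by simp
      moreover have "odd_adjacent M (ps ! n) z" using a[rule_format, of n] e1[of n] e3 by simp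
      ultimately show "(\<forall>k < n. odd_adjacent M (ps ! k) (ps ! (k + 1))) \<and> odd_adjacent M (ps ! n) z" by blast
    next
      assume a: "(\<forall>k < n. odd_adjacent M (ps ! k) (ps ! (k + 1))) \<and> odd_adjacent M (ps ! n) z"
      show "\<forall>k < Suc n. odd_adjacent M ((ps @ [z]) ! k) ((ps @ [z]) ! (k + 1))"
      proof (intro allI impI)
        fix k assume k: "k < Suc n"
        show "odd_adjacent M ((ps @ [z]) ! k) ((ps @ [z]) ! (k + 1))"
        proof (cases "k < n")
          case True then show ?thesis using a e1[OF k] e2[OF True] by simp
        next
          case False then have "k = n" using k by simp
          then show ?thesis using a e1[OF k] e3 by simp
        qed
      qed
    qed
  qed
  finally show ?thesis unfolding oa_path_def using n l assms by simp
qed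

lemma path_word:
  assumes E: "is_EGCM M"
  shows "oa_path M ps \<Longrightarrow> (\<exists>u. word_act M u (simple_root (hd ps)) = (\<lambda>l. oa_weight M ps * simple_root (last ps) l))
     \<and> oa_weight M ps > 0"
proof (induction ps rule: rev_induct)
  case Nil then show ?case by (simp add: oa_path_def)
next
  case (snoc z ps)
  show ?case
  proof (cases "ps = []")
    case True
    then show ?thesis by (auto simp: oa_weight_def intro!: exI[of _ "[]"])
  next
    case False
    have h: "oa_path M ps" "odd_adjacent M (last ps) z" using snoc.prems oa_path_snoc[OF False] by auto
    obtain u where u: "word_act M u (simple_root (hd ps)) = (\<lambda>l. oa_weight M ps * simple_root (last ps) l)"
      and w0: "oa_weight M ps > 0" using snoc.IH[OF h(1)] by blast
    obtain u' where u': "word_act M u' (simple_root (last ps)) = (\<lambda>l. oa_K M z (last ps) * simple_root z l)"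
      using oa_step(1)[OF E h(2)] by blast
    have K0: "oa_K M z (last ps) > 0" using oa_step(2)[OF E h(2)] .
    have "word_act M (u' @ u) (simple_root (hd (ps @ [z]))) = (\<lambda>l. oa_weight M ps * (oa_K M z (last ps) * simple_root z l))"
      using False by (simp add: word_act_append u word_act_scale u')
    then show ?thesis using oa_weight_snoc[OF False, of M z] w0 K0
      by (auto simp: mult.assoc intro!: exI[of _ "u' @ u"])
  qed
qed

lemma path_weight_one:
  assumes E: "is_EGCM M" and C: "\<forall>i j. \<not> odd_asymmetry M i j" and p: "oa_path M ps"
  shows "oa_weight M ps = 1"
  unfolding oa_weight_def
proof (rule prod.neutral, intro ballI)
  fix k assume "k \<in> {..<length ps - 1}"
  then have a: "odd_adjacent M (ps ! k) (ps ! (k + 1))" using p unfolding oa_path_def by simp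
  then have "M (ps ! k) (ps ! (k + 1)) = M (ps ! (k + 1)) (ps ! k)" using C unfolding odd_asymmetry_def by blast
  then show "oa_K M (ps ! (k + 1)) (ps ! k) = 1" using oa_step(3)[OF E a] by simp
qed

lemma comp_self: "x \<in> oa_component M x"
  unfolding oa_component_def oa_path_def by (intro CollectI exI[of _ "[x]"]) simp

lemma comp_closed:
  assumes "a \<in> oa_component M x" "odd_adjacent M a b"
  shows "b \<in> oa_component M x"
proof -
  obtain ps where ps: "oa_path M ps" "hd ps = x" "last ps = a" using assms(1) unfolding oa_component_def by blast
  have ne: "ps \<noteq> []" using ps(1) unfolding oa_path_def by simp
  have "oa_path M (ps @ [b])" using oa_path_snoc[OF ne] ps assms(2) by simp
  moreover have "hd (ps @ [b]) = x" using ne ps by simp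
  ultimately show ?thesis unfolding oa_component_def by force
qed

lemma refl_lin_form: "refl_act M i v = (\<lambda>l. 1 * v l + (- fS M i v) * simple_root i l)"
  by (rule ext) (simp add: refl_act_alt simple_root_def)

lemma not_inj_finite:
  assumes "finite (range f)"
  shows "\<exists>a b :: nat. a \<noteq> b \<and> f a = f b"
proof (rule ccontr)
  assume "\<not> (\<exists>a b :: nat. a \<noteq> b \<and> f a = f b)"
  then have "inj f" unfolding inj_def by blast
  then have "finite (UNIV :: nat set)" using finite_imageD[OF assms] by blast
  then show False by simp
qed

lemma conj_same_comp:
  assumes E: "is_EGCM M" and F: "finite (coxeter_group M)"
    and w: "word_act M w (simple_root y) = (\<lambda>l. K * simple_root x l)" and K: "K > 0"
  shows "y \<in> oa_component M x"
proof -
  define z where "z = w @ [y] @ rev w @ [x]"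
  have D: "\<forall>i. M i i = 2" using egcm_diag_all[OF E] .
  have zv: "word_act M z v = word_act M w (refl_act M y (word_act M (rev w) (refl_act M x v)))" for v
    by (simp add: z_def word_act_append)
  have rw: "word_act M (rev w) (simple_root x) = (\<lambda>l. (1 / K) * simple_root y l)"
  proof -
    have "word_act M (rev w) (\<lambda>l. K * simple_root x l) = simple_root y"
      using w word_act_rev[where M=M, of w "simple_root y"] D by simp
    then have "(\<lambda>l. K * word_act M (rev w) (simple_root x) l) = simple_root y"
      by (simp add: word_act_scale)
    then have "\<forall>l. K * word_act M (rev w) (simple_root x) l = simple_root y l" by (simp add: fun_eq_iff)
    then show ?thesis using K by (auto simp: field_simps)
  qed
  have zx: "word_act M z (simple_root x) = simple_root x"
  proof -
    have a: "refl_act M x (simple_root x) = (\<lambda>l. (-1) * simple_root x l)"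
      using refl_simple[of M x] D by simp
    have b: "word_act M (rev w) (\<lambda>l. (-1) * simple_root x l) = (\<lambda>l. (- 1 / K) * simple_root y l)"
      unfolding word_act_scale rw by simp
    have c: "refl_act M y (\<lambda>l. (- 1 / K) * simple_root y l) = (\<lambda>l. (1 / K) * simple_root y l)"
      using word_act_scale[of M "[y]" "- 1 / K" "simple_root y"] refl_simple[of M y] D by simp
    have d: "word_act M w (\<lambda>l. (1 / K) * simple_root y l) = simple_root x"
      unfolding word_act_scale w using K by simp
    show ?thesis unfolding zv a b c d ..
  qed
  have zform: "\<exists>t. word_act M z v = (\<lambda>l. v l + t * simple_root x l)" for v
  proof -
    define v1 where "v1 = refl_act M x v"
    define v2 where "v2 = word_act M (rev w) v1"
    have v1f: "v1 = (\<lambda>l. v l + (- fS M x v) * simple_root x l)"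
      unfolding v1_def by (rule ext) (simp add: refl_act_alt simple_root_def)
    have "word_act M z v = word_act M w (refl_act M y v2)" unfolding zv v1_def v2_def ..
    also have "\<dots> = word_act M w (\<lambda>l. 1 * v2 l + (- fS M y v2) * simple_root y l)"
      by (simp only: refl_lin_form[of M y v2])
    also have "\<dots> = (\<lambda>l. 1 * word_act M w v2 l + (- fS M y v2) * word_act M w (simple_root y) l)"
      by (rule word_act_lin)
    also have "word_act M w v2 = v1" unfolding v2_def using word_act_rev'[where M=M] D by simp
    finally have "word_act M z v = (\<lambda>l. v l + (- fS M x v - fS M y v2 * K) * simple_root x l)"
      unfolding v1f w by (simp add: algebra_simps)
    then show ?thesis by blast
  qed
  then have "\<forall>v. \<exists>t. word_act M z v = (\<lambda>l. v l + t * simple_root x l)" by blast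
  then have "\<exists>T. \<forall>v. word_act M z v = (\<lambda>l. v l + T v * simple_root x l)" by (rule choice)
  then obtain T where T0: "\<forall>v. word_act M z v = (\<lambda>l. v l + T v * simple_root x l)" by blast
  have T: "word_act M z v = (\<lambda>l. v l + T v * simple_root x l)" for v using T0 by blast
  have pow: "word_act M (concat (replicate n z)) v = (\<lambda>l. v l + real n * T v * simple_root x l)" for n v
  proof (induction n)
    case 0 then show ?case by simp
  next
    case (Suc n)
    have "word_act M (concat (replicate (Suc n) z)) v = word_act M z (\<lambda>l. 1 * v l + (real n * T v) * simple_root x l)"
      using Suc by (simp add: word_act_append)
    also have "\<dots> = (\<lambda>l. 1 * word_act M z v l + (real n * T v) * word_act M z (simple_root x) l)"
      by (rule word_act_lin)
    also have "\<dots> = (\<lambda>l. v l + real (Suc n) * T v * simple_root x l)"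
      unfolding zx T[of v] by (simp add: algebra_simps)
    finally show ?case .
  qed
  have sub: "range (\<lambda>n. word_act M (concat (replicate n z))) \<subseteq> range (word_act M)"
    by (rule image_subsetI) (rule rangeI)
  have fin: "finite (range (\<lambda>n. word_act M (concat (replicate n z))))"
    by (rule finite_subset[OF sub word_act_range_finite[OF E F]])
  obtain a b :: nat where ab: "a \<noteq> b" "word_act M (concat (replicate a z)) = word_act M (concat (replicate b z))"
    using not_inj_finite[OF fin] by blast
  have idz: "\<forall>v. word_act M z v = v"
  proof
    fix v
    have "word_act M (concat (replicate a z)) v x = word_act M (concat (replicate b z)) v x" using ab by simp
    then have "real a * T v = real b * T v" unfolding pow by (simp add: simple_root_def)
    then have "T v = 0" using ab(1) by simp
    then show "word_act M z v = v" using T[of v] by simp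
  qed
  have zc: "cox_eq M z []" by (rule faithful[OF E idz])
  let ?C = "oa_component M x"
  have cl: "\<forall>a b. a \<in> ?C \<longrightarrow> odd_adjacent M a b \<longrightarrow> b \<in> ?C"
  proof (intro allI impI)
    fix a b assume "a \<in> ?C" "odd_adjacent M a b"
    then show "b \<in> ?C" by (rule comp_closed)
  qed
  define P where "P = (\<lambda>u. u \<in> ?C)"
  have ev: "even (length (filter P z))" using cox_eq_count[OF zc cl] unfolding P_def by simp
  have r: "length (filter P (rev w)) = length (filter P w)"
    unfolding rev_filter[symmetric] length_rev ..
  have px: "P x" unfolding P_def by (rule comp_self)
  have "length (filter P z) = length (filter P w) + length (filter P [y]) + length (filter P (rev w)) + length (filter P [x])"
    unfolding z_def by simp
  also have "\<dots> = 2 * length (filter P w) + length (filter P [y]) + 1" using r px by simp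
  finally have "even (length (filter P [y]) + 1)" using ev by simp
  then have "P y" by (cases "P y") auto
  then show ?thesis unfolding P_def .
qed


definition Sx :: "('n::finite \<Rightarrow> 'n \<Rightarrow> real) \<Rightarrow> 'n \<Rightarrow> ('n \<Rightarrow> real) set" where
  "Sx M x = {v. \<exists>K::real. v = (\<lambda>k. K * simple_root x k)} \<inter> pos_roots M"

lemma f_at_Sx: "f_at M x = card (Sx M x)"
  by (simp add: f_at_def Sx_def)

lemma Sx_simple: "simple_root x \<in> Sx M x"
proof -
  have "simple_root x = (\<lambda>k. 1 * simple_root x k)" by simp
  then show ?thesis unfolding Sx_def using simple_pos[of x M] by blast
qed

lemma Sx_finite: "is_EGCM M \<Longrightarrow> finite (coxeter_group M) \<Longrightarrow> finite (Sx M x)"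
  unfolding Sx_def using pos_roots_finite by blast

lemma Sx_one:
  assumes E: "is_EGCM M" and F: "finite (coxeter_group M)" and f: "f_at M x = 1" and v: "v \<in> Sx M x"
  shows "v = simple_root x"
proof -
  have "card (Sx M x) = 1" using f unfolding f_at_Sx .
  then obtain a where a: "Sx M x = {a}" by (rule card_1_singletonE)
  then show ?thesis using v Sx_simple[of x M] by simp
qed

lemma scaled_in_Sx:
  assumes "word_act M u (simple_root y) = (\<lambda>l. K * simple_root x l)" "K > 0"
  shows "(\<lambda>l. K * simple_root x l) \<in> Sx M x"
proof -
  have "(\<lambda>l. K * simple_root x l) \<in> roots M" using root_mem[of M u y] assms(1) by simp
  moreover have "posv (\<lambda>l. K * simple_root x l)" using assms(2) unfolding posv_def by (simp add: simple_root_def)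
  ultimately have "(\<lambda>l. K * simple_root x l) \<in> pos_roots M" by (simp add: pos_roots_iff)
  then show ?thesis unfolding Sx_def by blast
qed

lemma scaled_eq:
  assumes "(\<lambda>l. K * simple_root x l) = simple_root x"
  shows "K = 1"
proof -
  have "K * simple_root x x = simple_root x x" using fun_cong[OF assms, of x] by simp
  then show ?thesis by (simp add: simple_root_def)
qed

lemma FC:
  assumes E: "is_EGCM M" and F: "finite (coxeter_group M)" and f: "\<forall>x. f_at M x = 1"
  shows "\<not> odd_asymmetry M i j"
proof
  assume "odd_asymmetry M i j"
  then have a: "odd_adjacent M i j" "M i j \<noteq> M j i" unfolding odd_asymmetry_def by auto
  obtain u where u: "word_act M u (simple_root i) = (\<lambda>l. oa_K M j i * simple_root j l)"
    using oa_step(1)[OF E a(1)] by blast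
  have K0: "oa_K M j i > 0" using oa_step(2)[OF E a(1)] .
  have K1: "oa_K M j i \<noteq> 1"
  proof
    assume "oa_K M j i = 1"
    then have "M i j = M j i" by (rule oa_step(4)[OF E a(1)])
    then show False using a(2) by simp
  qed
  have "(\<lambda>l. oa_K M j i * simple_root j l) \<in> Sx M j" by (rule scaled_in_Sx[OF u K0])
  then have "(\<lambda>l. oa_K M j i * simple_root j l) = simple_root j" by (rule Sx_one[OF E F f[rule_format, of j]])
  then have "oa_K M j i = 1" by (rule scaled_eq)
  then show False using K1 by simp
qed

lemma Funital:
  assumes E: "is_EGCM M" and F: "finite (coxeter_group M)" and f: "\<forall>x. f_at M x = 1"
  shows "unital_OA_cyclic M S"
  unfolding unital_OA_cyclic_def
proof (intro allI impI)
  fix ps assume "oa_cycle M ps \<and> set ps \<subseteq> S"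
  then have c: "oa_path M ps" "last ps = hd ps" unfolding oa_cycle_def by auto
  obtain u where u: "word_act M u (simple_root (hd ps)) = (\<lambda>l. oa_weight M ps * simple_root (hd ps) l)"
    and w0: "oa_weight M ps > 0" using path_word[OF E c(1)] c(2) by auto
  have "(\<lambda>l. oa_weight M ps * simple_root (hd ps) l) \<in> Sx M (hd ps)" by (rule scaled_in_Sx[OF u w0])
  then have "(\<lambda>l. oa_weight M ps * simple_root (hd ps) l) = simple_root (hd ps)" by (rule Sx_one[OF E F f[rule_format, of "hd ps"]])
  then show "oa_weight M ps = 1" by (rule scaled_eq)
qed

lemma pow_inj:
  assumes "(K::real) > 0" "K \<noteq> 1" "K ^ a = K ^ b"
  shows "a = b"
proof (cases "K > 1")
  case True then show ?thesis using assms(3) power_inject_exp by blast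
next
  case False
  then have "1 / K > 1" using assms(1,2) by (simp add: field_simps)
  moreover have "(1 / K) ^ a = (1 / K) ^ b" using assms(3) by (simp add: power_one_over)
  ultimately show ?thesis using power_inject_exp by blast
qed

lemma CF:
  assumes E: "is_EGCM M" and F: "finite (coxeter_group M)" and C: "\<forall>i j. \<not> odd_asymmetry M i j"
  shows "f_at M x = 1"
proof -
  have "Sx M x = {simple_root x}"
  proof
    show "{simple_root x} \<subseteq> Sx M x" using Sx_simple by blast
    show "Sx M x \<subseteq> {simple_root x}"
    proof
      fix v assume v: "v \<in> Sx M x"
      then obtain K where K: "v = (\<lambda>k. K * simple_root x k)" unfolding Sx_def by blast
      have "v \<in> pos_roots M" using v unfolding Sx_def by blast
      then have vr: "v \<in> roots M" "posv v" by (simp_all add: pos_roots_iff)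
      then obtain w y where wy: "v = word_act M w (simple_root y)" unfolding roots_def by blast
      have "0 \<le> v x" using vr(2) unfolding posv_def by simp
      then have "K \<ge> 0" using K by (simp add: simple_root_def)
      moreover have "K \<noteq> 0"
      proof
        assume "K = 0"
        then have "v = (\<lambda>k. 0)" using K by simp
        then show False using root_ne0[OF E, of w y] wy by simp
      qed
      ultimately have K0: "K > 0" by simp
      have wK: "word_act M w (simple_root y) = (\<lambda>l. K * simple_root x l)" using wy K by simp
      have "y \<in> oa_component M x" by (rule conj_same_comp[OF E F wK K0])
      then obtain ps where ps: "oa_path M ps" "hd ps = x" "last ps = y" unfolding oa_component_def by blast
      obtain u where u: "word_act M u (simple_root x) = (\<lambda>l. oa_weight M ps * simple_root y l)"
        using path_word[OF E ps(1)] ps by auto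
      have "oa_weight M ps = 1" by (rule path_weight_one[OF E C ps(1)])
      then have u1: "word_act M u (simple_root x) = simple_root y" using u by simp
      define h where "h = w @ u"
      have hx: "word_act M h (simple_root x) = (\<lambda>l. K * simple_root x l)"
        unfolding h_def by (simp add: word_act_append u1 wK)
      have pw: "word_act M (concat (replicate n h)) (simple_root x) = (\<lambda>l. K ^ n * simple_root x l)" for n
      proof (induction n)
        case 0 then show ?case by simp
      next
        case (Suc n)
        have "word_act M (concat (replicate (Suc n) h)) (simple_root x) = word_act M h (\<lambda>l. K ^ n * simple_root x l)"
          using Suc by (simp add: word_act_append)
        also have "\<dots> = (\<lambda>l. K ^ n * (K * simple_root x l))" unfolding word_act_scale hx ..
        finally show ?case by (simp add: algebra_simps)
      qed
      have mem: "(\<lambda>l. K ^ n * simple_root x l) \<in> pos_roots M" for n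
      proof -
        have "(\<lambda>l. K ^ n * simple_root x l) \<in> roots M" using root_mem[of M "concat (replicate n h)" x] pw by simp
        moreover have "posv (\<lambda>l. K ^ n * simple_root x l)" using K0 unfolding posv_def by (simp add: simple_root_def)
        ultimately show ?thesis unfolding pos_roots_iff by blast
      qed
      have "K = 1"
      proof (rule ccontr)
        assume K1: "K \<noteq> 1"
        have sub: "range (\<lambda>n. (\<lambda>l. K ^ n * simple_root x l)) \<subseteq> pos_roots M"
          using mem by blast
        have "finite (range (\<lambda>n. (\<lambda>l. K ^ n * simple_root x l)))"
          by (rule finite_subset[OF sub pos_roots_finite[OF E F]])
        then obtain a b :: nat where ab: "a \<noteq> b" "(\<lambda>l. K ^ a * simple_root x l) = (\<lambda>l. K ^ b * simple_root x l)"
          using not_inj_finite by blast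
        then have "K ^ a * simple_root x x = K ^ b * simple_root x x" using fun_cong[OF ab(2), of x] by simp
        then have "K ^ a = K ^ b" by (simp add: simple_root_def)
        then show False using pow_inj[OF K0 K1] ab(1) by blast
      qed
      then show "v \<in> {simple_root x}" using K by simp
    qed
  qed
  then show ?thesis unfolding f_at_Sx by simp
qed

lemma rf_inj:
  assumes "root_functional a = root_functional b"
  shows "a = b"
proof (rule ext)
  fix k
  have e: "root_functional v (simple_root k) = v k" for v :: "'a::finite \<Rightarrow> real"
  proof -
    have "root_functional v (simple_root k) = (\<Sum>i\<in>UNIV. if i = k then v k else 0)"
      unfolding root_functional_def simple_root_def by (rule sum.cong) auto
    then show ?thesis by simp
  qed
  show "a k = b k" using e[of a] e[of b] assms by simp
qed

context game
begin

lemma game_root_beta: "j \<in> {1..length seq} \<Longrightarrow> game_root M seq j = beta (j - 1)"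
  by (simp add: game_root_def beta_def)

lemma beta_in_pos: "k < length seq \<Longrightarrow> beta k \<in> pos_roots M"
proof -
  assume k: "k < length seq"
  have "beta k \<in> roots M" unfolding beta_def by (rule root_mem)
  then show ?thesis using beta_pos[OF k] by (simp add: pos_roots_iff)
qed

lemma beta_inj: "inj_on beta {..<length seq}"
proof (rule inj_onI)
  fix j k assume jk: "j \<in> {..<length seq}" "k \<in> {..<length seq}" "beta j = beta k"
  show "j = k"
  proof (rule ccontr)
    assume "j \<noteq> k"
    then consider "j < k" | "k < j" by linarith
    then show False
    proof cases
      case 1
      have eq: "beta k = (\<lambda>l. 1 * beta j l)" using jk(3) by simp
      have kl: "k < length seq" using jk(2) by simp
      show False by (rule rays_distinct[OF 1 kl zero_less_one eq])
    next
      case 2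
      have eq: "beta j = (\<lambda>l. 1 * beta k l)" using jk(3) by simp
      have jl: "j < length seq" using jk(1) by simp
      show False by (rule rays_distinct[OF 2 jl zero_less_one eq])
    qed
  qed
qed

theorem main:
  assumes F: "finite (coxeter_group M)"
  shows "((\<forall>a \<in> pos_roots M. \<exists>j \<in> {1..length seq}.
              root_functional a = root_functional (game_root M seq j))
          \<longleftrightarrow> (\<forall>x. unital_OA_cyclic M (oa_component M x) \<and> f_at M x = 1))
       \<and> ((\<forall>x. unital_OA_cyclic M (oa_component M x) \<and> f_at M x = 1)
          \<longleftrightarrow> (\<forall>i j. \<not> odd_asymmetry M i j))
       \<and> ((\<forall>i j. \<not> odd_asymmetry M i j)
          \<longleftrightarrow> (coxeter_length M (longest_element M) = card (pos_roots M)
               \<and> card (pos_roots M) = length seq))"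
proof -
  let ?P = "pos_roots M"
  let ?G = "beta ` {..<length seq}"
  have finP: "finite ?P" by (rule pos_roots_finite[OF E F])
  have GP: "?G \<subseteq> ?P" using beta_in_pos by blast
  have cG: "card ?G = length seq" using card_image[OF beta_inj] by simp
  have A_iff: "(\<forall>a \<in> ?P. \<exists>j \<in> {1..length seq}. root_functional a = root_functional (game_root M seq j))
      \<longleftrightarrow> ?P \<subseteq> ?G"
  proof
    assume a: "\<forall>a \<in> ?P. \<exists>j \<in> {1..length seq}. root_functional a = root_functional (game_root M seq j)"
    show "?P \<subseteq> ?G"
    proof
      fix v assume "v \<in> ?P"
      then obtain j where j: "j \<in> {1..length seq}" "root_functional v = root_functional (game_root M seq j)"
        using a by blast
      have "v = beta (j - 1)" using rf_inj[OF j(2)] game_root_beta[OF j(1)] by simp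
      moreover have "j - 1 < length seq" using j(1) by auto
      ultimately show "v \<in> ?G" by blast
    qed
  next
    assume s: "?P \<subseteq> ?G"
    show "\<forall>a \<in> ?P. \<exists>j \<in> {1..length seq}. root_functional a = root_functional (game_root M seq j)"
    proof
      fix v assume "v \<in> ?P"
      then obtain k where k: "k < length seq" "v = beta k" using s by blast
      then have "Suc k \<in> {1..length seq}" "game_root M seq (Suc k) = v"
        using game_root_beta[of "Suc k"] by auto
      then show "\<exists>j \<in> {1..length seq}. root_functional v = root_functional (game_root M seq j)" by metis
    qed
  qed
  have E1: "?P \<subseteq> ?G \<longleftrightarrow> card ?P = length seq"
  proof
    assume "?P \<subseteq> ?G"
    then have "?P = ?G" using GP by blast
    then show "card ?P = length seq" using cG by simp
  next
    assume c: "card ?P = length seq"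
    have "?G = ?P" by (rule card_subset_eq[OF finP GP]) (use c cG in simp)
    then show "?P \<subseteq> ?G" by simp
  qed
  have AF: "?P \<subseteq> ?G \<Longrightarrow> f_at M x = 1" for x
  proof -
    assume s: "?P \<subseteq> ?G"
    have "Sx M x = {simple_root x}"
    proof
      show "{simple_root x} \<subseteq> Sx M x" using Sx_simple by blast
      show "Sx M x \<subseteq> {simple_root x}"
      proof
        fix v assume v: "v \<in> Sx M x"
        then obtain K where K: "v = (\<lambda>k. K * simple_root x k)" unfolding Sx_def by blast
        have vP: "v \<in> ?P" using v unfolding Sx_def by blast
        then have vr: "v \<in> roots M" "posv v" by (simp_all add: pos_roots_iff)
        then obtain w y where wy: "v = word_act M w (simple_root y)" unfolding roots_def by blast
        have "0 \<le> v x" using vr(2) unfolding posv_def by simp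
        then have "K \<ge> 0" using K by (simp add: simple_root_def)
        moreover have "K \<noteq> 0"
        proof
          assume "K = 0"
          then have "v = (\<lambda>k. 0)" using K by simp
          then show False using root_ne0[OF E, of w y] wy by simp
        qed
        ultimately have K0: "K > 0" by simp
        obtain k where k: "k < length seq" "v = beta k" using s vP by blast
        obtain j where j: "j < length seq" "simple_root x = beta j" using s simple_pos[of x M] by blast
        have bk: "beta k = (\<lambda>l. K * beta j l)" using k(2) K j(2) by simp
        have "j = k"
        proof (rule ccontr)
          assume "j \<noteq> k"
          then consider "j < k" | "k < j" by linarith
          then show False
          proof cases
            case 1 show False by (rule rays_distinct[OF 1 k(1) K0 bk])
          next
            case 2
            have "beta j = (\<lambda>l. (1 / K) * beta k l)" using bk K0 by simp
            moreover have "1 / K > 0" using K0 by simp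
            ultimately show False using rays_distinct[OF 2 j(1)] by blast
          qed
        qed
        then show "v \<in> {simple_root x}" using k(2) j(2) by simp
      qed
    qed
    then show ?thesis unfolding f_at_Sx by simp
  qed
  have FA: "(\<forall>x. f_at M x = 1) \<Longrightarrow> ?P \<subseteq> ?G"
  proof
    fix v assume f: "\<forall>x. f_at M x = 1" and vP: "v \<in> ?P"
    then have vr: "v \<in> roots M" "posv v" by (simp_all add: pos_roots_iff)
    then obtain w i where wi: "v = word_act M w (simple_root i)" unfolding roots_def by blast
    obtain k c where kc: "k < length seq" "c > 0" "v = (\<lambda>l. c * beta k l)"
        "word_act M (rev (take k seq)) v = (\<lambda>l. c * simple_root (seq ! k) l)"
      using pos_root_beta[of w i] vr(2) wi by blast
    have "word_act M (rev (take k seq) @ w) (simple_root i) = (\<lambda>l. c * simple_root (seq ! k) l)"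
      using kc(4) wi by (simp add: word_act_append)
    then have "(\<lambda>l. c * simple_root (seq ! k) l) \<in> Sx M (seq ! k)" by (rule scaled_in_Sx[OF _ kc(2)])
    then have "(\<lambda>l. c * simple_root (seq ! k) l) = simple_root (seq ! k)"
      by (rule Sx_one[OF E F f[rule_format, of "seq ! k"]])
    then have "c = 1" by (rule scaled_eq)
    then show "v \<in> ?G" using kc by simp
  qed
  have Fiff: "(\<forall>x. f_at M x = 1) \<longleftrightarrow> ?P \<subseteq> ?G" using AF FA by blast
  have Biff: "(\<forall>x. unital_OA_cyclic M (oa_component M x) \<and> f_at M x = 1) \<longleftrightarrow> (\<forall>x. f_at M x = 1)"
    using Funital[OF E F] by blast
  have Ciff: "(\<forall>i j. \<not> odd_asymmetry M i j) \<longleftrightarrow> (\<forall>x. f_at M x = 1)"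
  proof
    assume "\<forall>i j. \<not> odd_asymmetry M i j"
    then show "\<forall>x. f_at M x = 1" using CF[OF E F] by blast
  next
    assume "\<forall>x. f_at M x = 1"
    then show "\<forall>i j. \<not> odd_asymmetry M i j" using FC[OF E F] by blast
  qed
  have Diff: "(coxeter_length M (longest_element M) = card ?P \<and> card ?P = length seq) \<longleftrightarrow> card ?P = length seq"
    using longest(2) by auto
  show ?thesis using A_iff E1 Fiff Biff Ciff Diff by blast
qed

end

theorem theorem5p5:
  fixes M :: "'n::finite \<Rightarrow> 'n \<Rightarrow> real"
    and lam :: "'n \<Rightarrow> real"
    and seq :: "'n list"
  assumes "is_EGCM M"
    and "finite (coxeter_group M)"
    and "strongly_dominant lam"
    and "game_sequence M lam seq"
  shows "((\<forall>a \<in> pos_roots M. \<exists>j \<in> {1..length seq}.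
              root_functional a = root_functional (game_root M seq j))
          \<longleftrightarrow> (\<forall>x. unital_OA_cyclic M (oa_component M x) \<and> f_at M x = 1))
       \<and> ((\<forall>x. unital_OA_cyclic M (oa_component M x) \<and> f_at M x = 1)
          \<longleftrightarrow> (\<forall>i j. \<not> odd_asymmetry M i j))
       \<and> ((\<forall>i j. \<not> odd_asymmetry M i j)
          \<longleftrightarrow> (coxeter_length M (longest_element M) = card (pos_roots M)
               \<and> card (pos_roots M) = length seq))"
proof -
  interpret game M lam seq using assms(1,3,4) by unfold_locales
  show ?thesis by (rule main[OF assms(2)])
qed

end
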